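(* Let $\mu$ be an $n$-dimensional AD regular Borel measure on $\mathbb R^d$ with $\operatorname{diam}(\operatorname{supp}\mu)=\infty$, let $\rho>2$ and $K$ admissible. There is a constant $C>0$ (depending on $n,d,K,\rho,\varphi_{\mathbb R}$ and the AD regularity constant) such that for every $\nu\in M(\mathbb R^d)$, every ball $B=B(x_B,r)\subset\mathbb R^d$, every $x\in B\cap\operatorname{supp}\mu$ and every $z\in B$, $$(\mathcal V_\rho\circ\mathcal T_\varphi)(\chi_{\mathbb R^d\setminus 2B}\nu)(x)\le(\mathcal V_\rho\circ\mathcal T_\varphi)(\chi_{\mathbb R^d\setminus 2B}\nu)(z)+C\,M^\mu\nu(x)$$ and the same inequality with the roles of $x$ and $z$ in the two variation terms interchanged (keeping $M^\mu\nu(x)$ on the right), where $2B=B(x_B,2r)$.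
   Context: Fix integers $1\le n<d$. A kernel $K:\mathbb R^d\setminus\{0\}\to\mathbb R$ is admissible if it is odd and there is $C>0$ with $|K(x)|\le C|x|^{-n}$, $|\partial_{x^i}K(x)|\le C|x|^{-n-1}$, $|\partial_{x^i}\partial_{x^j}K(x)|\le C|x|^{-n-2}$ for all $x\ne0$, $1\le i,j\le d$. Fix a nondecreasing $C^2$ function $\varphi_{\mathbb R}:[0,\infty)\to[0,\infty)$ with $\chi_{[4,\infty)}\le\varphi_{\mathbb R}\le\chi_{[1/4,\infty)}$ and $\chi_{[1/3,3]}\le C|\varphi_{\mathbb R}'|$; set $\varphi_\epsilon(x)=\varphi_{\mathbb R}(|x|^2/\epsilon^2)$. For a finite real Borel measure $\nu$, $T_{\varphi_\epsilon}\nu(x)=\int\varphi_\epsilon(x-y)K(x-y)\,d\nu(y)$, $\mathcal T_\varphi\nu=\{T_{\varphi_\epsilon}\nu\}_{\epsilon>0}$. The $\rho$-variation of a family $\{F_\epsilon\}_{\epsilon>0}$ is $\mathcal V_\rho(\{F_\epsilon\})(x)=\sup(\sum_{m\in\mathbb Z}|F_{\epsilon_{m+1}}(x)-F_{\epsilon_m}(x)|^\rho)^{1/\rho}$, sup over decreasing sequences $\{\epsilon_m\}_{m\in\mathbb Z}\subset(0,\infty)$. $M(\mathbb R^d)$ is the space of finite real Borel measures. $M^\mu\nu(x)=\sup_{r>0}|\nu|(B(x,r))/\mu(B(x,r))$ for $x\in\operatorname{supp}\mu$. $\mu$ is $n$-dimensional AD regular if $C^{-1}r^n\le\mu(B(x,r))\le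 Cr^n$ for all $x\in\operatorname{supp}\mu$ and $r>0$. *)

theory Defs
  imports "HOL-Analysis.Analysis"
begin

(* D1 i x stands for (d/dx^i) K (x), D2 i j x for (d/dx^j)(d/dx^i) K (x). *)
definition admissible_kernel :: "nat \<Rightarrow> ('a::euclidean_space \<Rightarrow> real) \<Rightarrow> bool" where
  "admissible_kernel n K \<longleftrightarrow>
     (\<forall>x. x \<noteq> 0 \<longrightarrow> K (- x) = - K x) \<and>
     (\<exists>C>0. \<exists>(D1 :: 'a \<Rightarrow> 'a \<Rightarrow> real) (D2 :: 'a \<Rightarrow> 'a \<Rightarrow> 'a \<Rightarrow> real).
        \<forall>x. x \<noteq> 0 \<longrightarrow>
          \<bar>K x\<bar> \<le> C / norm x ^ n \<and>
          (\<forall>i\<in>Basis. ((\<lambda>t. K (x + t *\<^sub>R i)) has_real_derivative D1 i x) (at 0) \<and>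
             \<bar>D1 i x\<bar> \<le> C / norm x ^ (n + 1) \<and>
             (\<forall>j\<in>Basis. ((\<lambda>t. D1 i (x + t *\<^sub>R j)) has_real_derivative D2 i j x) (at 0) \<and>
                \<bar>D2 i j x\<bar> \<le> C / norm x ^ (n + 2))))"

(* The fixed profile phi_R : [0,oo) -> [0,oo): nondecreasing, C^2 (one-sided
   derivatives at 0), chi_[4,oo) <= phi <= chi_[1/4,oo), chi_[1/3,3] <= C |phi'|. *)
definition phiR_admissible :: "(real \<Rightarrow> real) \<Rightarrow> bool" where
  "phiR_admissible \<phi> \<longleftrightarrow>
     mono_on {0..} \<phi> \<and>
     (\<forall>t\<ge>0. 0 \<le> \<phi> t) \<and>
     (\<forall>t\<ge>0. (indicator {4..} t :: real) \<le> \<phi> t \<and> \<phi> t \<le> (indicator {1/4..} t :: real)) \<and>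
     (\<exists>\<phi>1 \<phi>2. (\<forall>t\<ge>0. (\<phi> has_real_derivative \<phi>1 t) (at t within {0..}) \<and>
                      (\<phi>1 has_real_derivative \<phi>2 t) (at t within {0..})) \<and>
               continuous_on {0..} \<phi>2 \<and>
               (\<exists>C>0. \<forall>t\<in>{1/3..3}. (1::real) \<le> C * \<bar>\<phi>1 t\<bar>))"

definition phi_eps :: "(real \<Rightarrow> real) \<Rightarrow> real \<Rightarrow> 'a::euclidean_space \<Rightarrow> real" where
  "phi_eps \<phi> \<epsilon> x = \<phi> (norm x ^ 2 / \<epsilon> ^ 2)"

(* A finite real Borel measure nu is represented by its Jordan decomposition
   nu = nu1 - nu2 (finite positive Borel measures, mutually singular);
   then |nu| = nu1 + nu2. *)
definition finite_signed_borel :: "'a::euclidean_space measure \<Rightarrow> 'a measure \<Rightarrow> bool" where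
  "finite_signed_borel \<nu>1 \<nu>2 \<longleftrightarrow>
     sets \<nu>1 = sets borel \<and> sets \<nu>2 = sets borel \<and>
     finite_measure \<nu>1 \<and> finite_measure \<nu>2 \<and>
     (\<exists>A\<in>sets borel. emeasure \<nu>1 A = 0 \<and> emeasure \<nu>2 (UNIV - A) = 0)"

definition T_phi :: "(real \<Rightarrow> real) \<Rightarrow> ('a::euclidean_space \<Rightarrow> real) \<Rightarrow> 'a measure \<Rightarrow> 'a measure
                     \<Rightarrow> real \<Rightarrow> 'a \<Rightarrow> real" where
  "T_phi \<phi> K \<nu>1 \<nu>2 \<epsilon> x =
     (\<integral>y. phi_eps \<phi> \<epsilon> (x - y) * K (x - y) \<partial>\<nu>1) - (\<integral>y. phi_eps \<phi> \<epsilon> (x - y) * K (x - y) \<partial>\<nu>2)"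

(* rho-variation of a family {F_eps}_{eps>0}: supremum over strictly decreasing
   Z-indexed sequences in (0,oo) of the l^rho norm of the increments; the infinite
   series is written as the supremum of its symmetric partial sums. *)
definition rho_variation :: "real \<Rightarrow> (real \<Rightarrow> real) \<Rightarrow> ereal" where
  "rho_variation \<rho> F =
     (SUP p \<in> {(e :: int \<Rightarrow> real, N :: nat). (\<forall>m. 0 < e m) \<and> (\<forall>m. e (m + 1) < e m)}.
        ereal ((\<Sum>m\<in>{- int (snd p)..int (snd p)}.
                  \<bar>F (fst p (m + 1)) - F (fst p m)\<bar> powr \<rho>) powr (1 / \<rho>)))"

definition supp_meas :: "'a::metric_space measure \<Rightarrow> 'a set" where
  "supp_meas \<mu> = {x. \<forall>r>0. emeasure \<mu> (ball x r) > 0}"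

definition AD_regular :: "nat \<Rightarrow> real \<Rightarrow> 'a::euclidean_space measure \<Rightarrow> bool" where
  "AD_regular n C0 \<mu> \<longleftrightarrow> sets \<mu> = sets borel \<and> 0 < C0 \<and>
     (\<forall>x\<in>supp_meas \<mu>. \<forall>r>0.
        ennreal (r ^ n / C0) \<le> emeasure \<mu> (ball x r) \<and> emeasure \<mu> (ball x r) \<le> ennreal (C0 * r ^ n))"

definition max_mu :: "'a::euclidean_space measure \<Rightarrow> 'a measure \<Rightarrow> 'a measure \<Rightarrow> 'a \<Rightarrow> ereal" where
  "max_mu \<mu> \<nu>1 \<nu>2 x =
     (SUP r \<in> {0<..}. ereal ((measure \<nu>1 (ball x r) + measure \<nu>2 (ball x r)) / measure \<mu> (ball x r)))"

end

theory Submission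
  imports Defs
begin

lemma powr_incr_diff:
  fixes d \<rho> s A :: real
  assumes "1 \<le> \<rho>" "0 \<le> s" "s \<le> A" "0 \<le> d"
  shows "(s+d) powr \<rho> - s powr \<rho> \<le> (A+d) powr \<rho> - A powr \<rho>"
proof (rule DERIV_nonneg_imp_increasing_open[OF assms(3)])
  fix x assume x: "s < x" "x < A"
  hence xp: "0 < x" using assms by auto
  have "DERIV (\<lambda>x. (x+d) powr \<rho> - x powr \<rho>) x :> (\<rho> * (x+d) powr (\<rho>-1) - \<rho> * x powr (\<rho> - 1))"
    using xp assms by (auto intro!: derivative_eq_intros)
  moreover have "x powr (\<rho>-1) \<le> (x+d) powr (\<rho>-1)"
    using xp assms by (intro powr_mono2) auto
  ultimately show "\<exists>y. DERIV (\<lambda>x. (x+d) powr \<rho> - x powr \<rho>) x :> y \<and> 0 \<le> y"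
    using assms by (intro exI[of _ "\<rho> * (x+d) powr (\<rho>-1) - \<rho> * x powr (\<rho> - 1)"]) auto
next
  show "continuous_on {s..A} (\<lambda>x. (x+d) powr \<rho> - x powr \<rho>)"
    using assms by (intro continuous_intros continuous_on_powr') auto
qed

lemma scal_lip:
  fixes R s t \<rho> :: real
  assumes r: "1 \<le> \<rho>" and R: "0 \<le> R" and s: "0 \<le> s" and t: "0 \<le> t"
  shows "(R + t powr \<rho>) powr (1/\<rho>) \<le> (R + s powr \<rho>) powr (1/\<rho>) + \<bar>t - s\<bar>"
proof (cases "t \<le> s")
  case True
  have "t powr \<rho> \<le> s powr \<rho>" using True r t by (intro powr_mono2) auto
  hence "(R + t powr \<rho>) powr (1/\<rho>) \<le> (R + s powr \<rho>) powr (1/\<rho>)"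
    using r R t by (intro powr_mono2) auto
  thus ?thesis by simp
next
  case False
  define A where "A = (R + s powr \<rho>) powr (1/\<rho>)"
  define d where "d = t - s"
  have d: "0 \<le> d" using False d_def by simp
  have A0: "0 \<le> A" unfolding A_def by simp
  have Ap: "A powr \<rho> = R + s powr \<rho>"
    unfolding A_def using r R by (simp add: powr_powr)
  have "s = (s powr \<rho>) powr (1/\<rho>)" using r s by (simp add: powr_powr)
  also have "\<dots> \<le> A" unfolding A_def using r R by (intro powr_mono2) auto
  finally have sA: "s \<le> A" .
  have "(s+d) powr \<rho> - s powr \<rho> \<le> (A+d) powr \<rho> - A powr \<rho>"
    by (rule powr_incr_diff[OF r s sA d])
  hence "R + t powr \<rho> \<le> (A+d) powr \<rho>" using Ap d_def by simp
  hence "(R + t powr \<rho>) powr (1/\<rho>) \<le> ((A+d) powr \<rho>) powr (1/\<rho>)"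
    using r R t by (intro powr_mono2) auto
  also have "\<dots> = A + d" using r A0 d by (simp add: powr_powr)
  finally show ?thesis using A_def d_def False by simp
qed

lemma lrho_lip:
  fixes a b :: "'i \<Rightarrow> real"
  assumes I: "finite I" and r: "1 \<le> \<rho>"
  shows "(\<Sum>i\<in>I. \<bar>a i\<bar> powr \<rho>) powr (1/\<rho>) \<le> (\<Sum>i\<in>I. \<bar>b i\<bar> powr \<rho>) powr (1/\<rho>) + (\<Sum>i\<in>I. \<bar>a i - b i\<bar>)"
proof -
  define h where "h J i = (if i \<in> J then a i else b i)" for J i
  have "(\<Sum>i\<in>I. \<bar>h J i\<bar> powr \<rho>) powr (1/\<rho>) \<le> (\<Sum>i\<in>I. \<bar>b i\<bar> powr \<rho>) powr (1/\<rho>) + (\<Sum>i\<in>J. \<bar>a i - b i\<bar>)"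
    if "J \<subseteq> I" for J
  proof -
    have "finite J" using that I finite_subset by blast
    thus ?thesis using that
    proof (induction J rule: finite_induct)
      case empty
      then show ?case by (simp add: h_def)
    next
      case (insert j J)
      have jI: "j \<in> I" using insert by auto
      define Rj where "Rj = (\<Sum>i\<in>I-{j}. \<bar>h J i\<bar> powr \<rho>)"
      have e1: "(\<Sum>i\<in>I. \<bar>h J i\<bar> powr \<rho>) = \<bar>b j\<bar> powr \<rho> + Rj"
        unfolding Rj_def using sum.remove[OF I jI, of "\<lambda>i. \<bar>h J i\<bar> powr \<rho>"] insert by (simp add: h_def)
      have "(\<Sum>i\<in>I-{j}. \<bar>h (insert j J) i\<bar> powr \<rho>) = Rj"
        unfolding Rj_def by (intro sum.cong) (auto simp: h_def)
      hence e2: "(\<Sum>i\<in>I. \<bar>h (insert j J) i\<bar> powr \<rho>) = \<bar>a j\<bar> powr \<rho> + Rj"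
        using sum.remove[OF I jI, of "\<lambda>i. \<bar>h (insert j J) i\<bar> powr \<rho>"] by (simp add: h_def)
      have R0: "0 \<le> Rj" unfolding Rj_def by (intro sum_nonneg) auto
      have "(\<Sum>i\<in>I. \<bar>h (insert j J) i\<bar> powr \<rho>) powr (1/\<rho>) \<le> (\<Sum>i\<in>I. \<bar>h J i\<bar> powr \<rho>) powr (1/\<rho>) + \<bar>\<bar>a j\<bar> - \<bar>b j\<bar>\<bar>"
        using scal_lip[OF r R0, of "\<bar>b j\<bar>" "\<bar>a j\<bar>"] e1 e2 by (simp add: add.commute)
      also have "\<bar>\<bar>a j\<bar> - \<bar>b j\<bar>\<bar> \<le> \<bar>a j - b j\<bar>" by simp
      finally show ?case using insert by simp
    qed
  qed
  from this[of I] show ?thesis by (simp add: h_def)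
qed

lemma telesc_int:
  fixes f :: "int \<Rightarrow> real"
  shows "(\<Sum>m\<in>{a..a + int k - 1}. f (m+1) - f m) = f (a + int k) - f a"
proof (induction k)
  case 0 then show ?case by simp
next
  case (Suc k)
  have "{a..a + int (Suc k) - 1} = insert (a + int k) {a..a + int k - 1}" by auto
  then show ?case using Suc by (simp add: algebra_simps)
qed

lemma telesc_sym:
  fixes f :: "int \<Rightarrow> real"
  shows "(\<Sum>m\<in>{- int N..int N}. f (m+1) - f m) = f (int N + 1) - f (- int N)"
  using telesc_int[of f "- int N" "2*N+1"] by (simp add: algebra_simps)

definition var :: "nat \<Rightarrow> (int \<Rightarrow> real) \<Rightarrow> real" where
  "var N h = (\<Sum>m\<in>{- int N..int N}. \<bar>h (m+1) - h m\<bar>)"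

lemma var_nonneg: "0 \<le> var N h" unfolding var_def by (intro sum_nonneg) auto

lemma var_add: "var N (\<lambda>m. h1 m + h2 m) \<le> var N h1 + var N h2"
  unfolding var_def sum.distrib[symmetric] by (intro sum_mono) auto

lemma var_diff: "var N (\<lambda>m. h1 m - h2 m) \<le> var N h1 + var N h2"
  unfolding var_def sum.distrib[symmetric] by (intro sum_mono) auto

lemma var_cmult: "var N (\<lambda>m. c * h m) = \<bar>c\<bar> * var N h"
  unfolding var_def sum_distrib_left by (intro sum.cong) (auto simp: abs_mult[symmetric] algebra_simps)

lemma var_mono:
  assumes "\<And>m. h m \<le> h (m+1)" "\<And>m. lo \<le> h m" "\<And>m. h m \<le> hi"
  shows "var N h \<le> hi - lo"
proof -
  have "var N h = (\<Sum>m\<in>{- int N..int N}. h (m+1) - h m)"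
    unfolding var_def using assms(1) by (intro sum.cong) auto
  also have "\<dots> = h (int N + 1) - h (- int N)" by (rule telesc_sym)
  also have "\<dots> \<le> hi - lo" using assms(2,3) by (intro diff_mono)
  finally show ?thesis .
qed

lemma var_lip:
  assumes "\<And>m. c m \<le> c (m+1)" "\<And>m. \<alpha> \<le> c m" "\<And>m. c m \<le> \<beta>"
    and lip: "\<And>s t. \<alpha> \<le> s \<Longrightarrow> s \<le> \<beta> \<Longrightarrow> \<alpha> \<le> t \<Longrightarrow> t \<le> \<beta> \<Longrightarrow> \<bar>G s - G t\<bar> \<le> L * \<bar>s - t\<bar>"
    and L: "0 \<le> L"
  shows "var N (\<lambda>m. G (c m)) \<le> L * (\<beta> - \<alpha>)"
proof -
  have "var N (\<lambda>m. G (c m)) \<le> (\<Sum>m\<in>{- int N..int N}. L * \<bar>c (m+1) - c m\<bar>)"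
    unfolding var_def using assms by (intro sum_mono lip) auto
  also have "\<dots> = L * var N c" unfolding var_def by (simp add: sum_distrib_left)
  also have "\<dots> \<le> L * (\<beta> - \<alpha>)" using assms by (intro mult_left_mono var_mono) auto
  finally show ?thesis .
qed

lemma lip_mvt:
  fixes f f' :: "real \<Rightarrow> real"
  assumes der: "\<And>t. min a b \<le> t \<Longrightarrow> t \<le> max a b \<Longrightarrow> (f has_real_derivative f' t) (at t)"
    and bd: "\<And>t. min a b \<le> t \<Longrightarrow> t \<le> max a b \<Longrightarrow> \<bar>f' t\<bar> \<le> B"
  shows "\<bar>f b - f a\<bar> \<le> B * \<bar>b - a\<bar>"
proof (cases a b rule: linorder_cases)
  case less
  then obtain z where z: "a < z" "z < b" "f b - f a = (b - a) * f' z"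
    using MVT2[OF less, of f f'] der by auto
  have "\<bar>f' z\<bar> \<le> B" using z less by (intro bd) auto
  then show ?thesis using z less by (simp add: abs_mult mult.commute mult_left_mono)
next
  case equal then show ?thesis by simp
next
  case greater
  then obtain z where z: "b < z" "z < a" "f a - f b = (a - b) * f' z"
    using MVT2[OF greater, of f f'] der by auto
  have "\<bar>f' z\<bar> \<le> B" using z greater by (intro bd) auto
  then show ?thesis using z greater by (simp add: abs_mult mult.commute mult_left_mono abs_minus_commute)
qed

lemma sum_coord_le:
  fixes w :: "'a::euclidean_space"
  shows "(\<Sum>i\<in>Basis. \<bar>w \<bullet> i\<bar>) \<le> real DIM('a) * norm w"
proof -
  have "(\<Sum>i\<in>Basis. \<bar>w \<bullet> i\<bar>) \<le> (\<Sum>i\<in>(Basis::'a set). norm w)"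
    by (intro sum_mono Basis_le_norm)
  then show ?thesis by simp
qed


lemma K_lip:
  fixes K :: "'a::euclidean_space \<Rightarrow> real" and D1 :: "'a \<Rightarrow> 'a \<Rightarrow> real"
  assumes der: "\<And>x i. x \<noteq> 0 \<Longrightarrow> i \<in> Basis \<Longrightarrow> ((\<lambda>t. K (x + t *\<^sub>R i)) has_real_derivative D1 i x) (at 0)"
    and bnd: "\<And>x i. x \<noteq> 0 \<Longrightarrow> i \<in> Basis \<Longrightarrow> \<bar>D1 i x\<bar> \<le> C / norm x ^ (n+1)"
    and C: "0 \<le> C" and u: "u \<noteq> 0" and close: "real DIM('a) * norm (v - u) \<le> norm u / 2"
  shows "\<bar>K v - K u\<bar> \<le> C * (2 / norm u)^(n+1) * (real DIM('a) * norm (v - u))"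
proof -
  define p where "p S = u + (\<Sum>i\<in>S. ((v-u) \<bullet> i) *\<^sub>R i)" for S
  define Lb where "Lb = C * (2 / norm u)^(n+1)"
  have Lb0: "0 \<le> Lb" unfolding Lb_def using C by simp
  have nu: "0 < norm u" using u by simp
  have far: "norm u / 2 \<le> norm (p S + t *\<^sub>R j)"
    if "S \<subseteq> Basis" "j \<in> Basis" "j \<notin> S" "\<bar>t\<bar> \<le> \<bar>(v-u) \<bullet> j\<bar>" for S j t
  proof -
    have "norm (p S + t *\<^sub>R j - u) = norm ((\<Sum>i\<in>S. ((v-u) \<bullet> i) *\<^sub>R i) + t *\<^sub>R j)"
      unfolding p_def by (simp add: algebra_simps)
    also have "\<dots> \<le> norm (\<Sum>i\<in>S. ((v-u) \<bullet> i) *\<^sub>R i) + norm (t *\<^sub>R j)" by (rule norm_triangle_ineq)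
    also have "\<dots> \<le> (\<Sum>i\<in>S. \<bar>(v-u) \<bullet> i\<bar>) + \<bar>(v-u) \<bullet> j\<bar>"
      using that by (intro add_mono order.trans[OF norm_sum] sum_mono) (auto simp: subset_iff)
    also have "\<dots> = (\<Sum>i\<in>insert j S. \<bar>(v-u) \<bullet> i\<bar>)"
      using that finite_subset[OF that(1)] by simp
    also have "\<dots> \<le> (\<Sum>i\<in>Basis. \<bar>(v-u) \<bullet> i\<bar>)"
      using that by (intro sum_mono2) auto
    also have "\<dots> \<le> real DIM('a) * norm (v - u)" by (rule sum_coord_le)
    also have "\<dots> \<le> norm u / 2" by (rule close)
    finally have "norm (p S + t *\<^sub>R j - u) \<le> norm u / 2" .
    moreover have "norm u \<le> norm (p S + t *\<^sub>R j) + norm (p S + t *\<^sub>R j - u)"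
      using norm_triangle_ineq4[of "p S + t *\<^sub>R j" "p S + t *\<^sub>R j - u"] by simp
    ultimately show ?thesis by simp
  qed
  have "\<bar>K (p S) - K u\<bar> \<le> Lb * (\<Sum>i\<in>S. \<bar>(v-u) \<bullet> i\<bar>)" if "S \<subseteq> Basis" for S
  proof -
    have "finite S" using finite_subset[OF that finite_Basis] .
    thus ?thesis using that
    proof (induction S rule: finite_induct)
      case empty then show ?case by (simp add: p_def)
    next
      case (insert j S)
      define h where "h = (v-u) \<bullet> j"
      have pins: "p (insert j S) = p S + h *\<^sub>R j" unfolding p_def h_def using insert by simp
      have jB: "j \<in> Basis" and SB: "S \<subseteq> Basis" using insert by auto
      have "\<bar>K (p S + h *\<^sub>R j) - K (p S + 0 *\<^sub>R j)\<bar> \<le> Lb * \<bar>h - 0\<bar>"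
      proof (rule lip_mvt[where f' = "\<lambda>t. D1 j (p S + t *\<^sub>R j)"])
        fix t assume t: "min 0 h \<le> t" "t \<le> max 0 h"
        hence tb: "\<bar>t\<bar> \<le> \<bar>(v-u) \<bullet> j\<bar>" unfolding h_def by auto
        have fa: "norm u / 2 \<le> norm (p S + t *\<^sub>R j)" using far[OF SB jB insert(2) tb] .
        hence np: "0 < norm (p S + t *\<^sub>R j)" using nu by linarith
        hence nz: "p S + t *\<^sub>R j \<noteq> 0" by auto
        have "((\<lambda>s. K (p S + t *\<^sub>R j + s *\<^sub>R j)) has_real_derivative D1 j (p S + t *\<^sub>R j)) (at 0)"
          using der[OF nz jB] .
        hence "((\<lambda>s. K (p S + (s + t) *\<^sub>R j)) has_real_derivative D1 j (p S + t *\<^sub>R j)) (at 0)"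
          by (simp add: algebra_simps scaleR_add_left)
        thus "((\<lambda>s. K (p S + s *\<^sub>R j)) has_real_derivative D1 j (p S + t *\<^sub>R j)) (at t)"
          using DERIV_shift[of "\<lambda>s. K (p S + s *\<^sub>R j)" _ 0 t] by simp
        have "\<bar>D1 j (p S + t *\<^sub>R j)\<bar> \<le> C / norm (p S + t *\<^sub>R j) ^ (n+1)" using bnd[OF nz jB] .
        also have "\<dots> \<le> C / (norm u / 2) ^ (n+1)"
          using fa nu C np by (intro divide_left_mono power_mono mult_pos_pos zero_less_power) auto
        also have "\<dots> = Lb" unfolding Lb_def by (simp add: power_divide)
        finally show "\<bar>D1 j (p S + t *\<^sub>R j)\<bar> \<le> Lb" .
      qed
      hence "\<bar>K (p (insert j S)) - K (p S)\<bar> \<le> Lb * \<bar>(v-u) \<bullet> j\<bar>" using pins h_def by simp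
      moreover have "\<bar>K (p S) - K u\<bar> \<le> Lb * (\<Sum>i\<in>S. \<bar>(v-u) \<bullet> i\<bar>)" using insert SB by simp
      ultimately show ?case using insert by (simp add: distrib_left)
    qed
  qed
  from this[of Basis] have "\<bar>K (p Basis) - K u\<bar> \<le> Lb * (\<Sum>i\<in>Basis. \<bar>(v-u) \<bullet> i\<bar>)" by simp
  moreover have "p Basis = v" unfolding p_def by (simp add: euclidean_representation)
  ultimately have "\<bar>K v - K u\<bar> \<le> Lb * (\<Sum>i\<in>Basis. \<bar>(v-u) \<bullet> i\<bar>)" by simp
  also have "\<dots> \<le> Lb * (real DIM('a) * norm (v - u))"
    using Lb0 sum_coord_le by (intro mult_left_mono) auto
  finally show ?thesis unfolding Lb_def .
qed

lemma phi_basic: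
  assumes "phiR_admissible \<phi>"
  shows "\<And>t. 0 \<le> t \<Longrightarrow> 0 \<le> \<phi> t \<and> \<phi> t \<le> 1"
    and "\<And>t. 0 \<le> t \<Longrightarrow> t < 1/4 \<Longrightarrow> \<phi> t = 0"
    and "\<And>t. 4 \<le> t \<Longrightarrow> \<phi> t = 1"
    and "\<And>s t. 0 \<le> s \<Longrightarrow> s \<le> t \<Longrightarrow> \<phi> s \<le> \<phi> t"
proof -
  have m: "mono_on {0..} \<phi>" and nn: "\<forall>t\<ge>0. 0 \<le> \<phi> t"
    and ind: "\<forall>t\<ge>0. (indicator {4..} t :: real) \<le> \<phi> t \<and> \<phi> t \<le> (indicator {1/4..} t :: real)"
    using assms unfolding phiR_admissible_def by blast+
  show "0 \<le> \<phi> t \<and> \<phi> t \<le> 1" if "0 \<le> t" for t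
  proof -
    have "\<phi> t \<le> (indicator {1/4..} t :: real)" using ind[rule_format, OF that(1)] by (rule conjunct2)
    moreover have "(indicator {1/4..} t :: real) \<le> 1" by (simp add: indicator_def)
    moreover have "0 \<le> \<phi> t" using nn that by auto
    ultimately show ?thesis by linarith
  qed
  show "\<phi> t = 0" if "0 \<le> t" "t < 1/4" for t
  proof -
    have "\<phi> t \<le> (indicator {1/4..} t :: real)" using ind[rule_format, OF that(1)] by (rule conjunct2)
    moreover have "(indicator {1/4..} t :: real) = 0" using that by (simp add: indicator_def)
    moreover have "0 \<le> \<phi> t" using nn that by auto
    ultimately show ?thesis by linarith
  qed
  show "\<phi> t = 1" if "4 \<le> t" for t
  proof -
    have "(indicator {4..} t :: real) \<le> \<phi> t \<and> \<phi> t \<le> (indicator {1/4..} t :: real)" using ind that by (meson order_trans zero_le_numeral)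
    moreover have "(indicator {1/4..} t :: real) = 1" "(indicator {4..} t :: real) = 1" using that by auto
    ultimately show ?thesis by linarith
  qed
  show "\<phi> s \<le> \<phi> t" if "0 \<le> s" "s \<le> t" for s t
    using m that by (auto simp: mono_on_def)
qed

lemma phi_deriv:
  assumes "phiR_admissible \<phi>"
  obtains \<phi>1 P1 P2 where
    "\<And>t. 0 < t \<Longrightarrow> (\<phi> has_real_derivative \<phi>1 t) (at t)"
    "\<And>t. 0 \<le> t \<Longrightarrow> t \<le> 16 \<Longrightarrow> \<bar>\<phi>1 t\<bar> \<le> P1"
    "\<And>s t. 0 < s \<Longrightarrow> s \<le> 16 \<Longrightarrow> 0 < t \<Longrightarrow> t \<le> 16 \<Longrightarrow> \<bar>\<phi>1 s - \<phi>1 t\<bar> \<le> P2 * \<bar>s - t\<bar>"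
    "0 \<le> P1" "0 \<le> P2" "continuous_on {0..} \<phi>"
proof -
  obtain \<phi>1 \<phi>2 where d: "\<forall>t\<ge>0. (\<phi> has_real_derivative \<phi>1 t) (at t within {0..}) \<and>
                      (\<phi>1 has_real_derivative \<phi>2 t) (at t within {0..})"
    and c2: "continuous_on {0..} \<phi>2"
    using assms unfolding phiR_admissible_def by blast
  have at: "(\<phi> has_real_derivative \<phi>1 t) (at t)" "(\<phi>1 has_real_derivative \<phi>2 t) (at t)" if "0 < t" for t
  proof -
    have "at t within {0..} = at t" using that by (intro at_within_interior) auto
    moreover have "0 \<le> t" using that by simp
    hence "(\<phi> has_real_derivative \<phi>1 t) (at t within {0..}) \<and>
                      (\<phi>1 has_real_derivative \<phi>2 t) (at t within {0..})" using d by simp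
    ultimately show "(\<phi> has_real_derivative \<phi>1 t) (at t)" "(\<phi>1 has_real_derivative \<phi>2 t) (at t)"
      by simp_all
  qed
  have c1: "continuous_on {0..} \<phi>1"
    unfolding continuous_on_eq_continuous_within
  proof
    fix x :: real assume "x \<in> {0..}"
    hence "(\<phi>1 has_real_derivative \<phi>2 x) (at x within {0..})" using d by simp
    thus "continuous (at x within {0..}) \<phi>1" by (rule DERIV_continuous)
  qed
  have c0: "continuous_on {0..} \<phi>"
    unfolding continuous_on_eq_continuous_within
  proof
    fix x :: real assume "x \<in> {0..}"
    hence "(\<phi> has_real_derivative \<phi>1 x) (at x within {0..})" using d by simp
    thus "continuous (at x within {0..}) \<phi>" by (rule DERIV_continuous)
  qed
  have "compact (\<phi>1 ` {0..16})" using c1 by (intro compact_continuous_image) (auto intro: continuous_on_subset)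
  hence "bounded (\<phi>1 ` {0..16})" by (rule compact_imp_bounded)
  then obtain P1 where P1: "\<forall>x\<in>\<phi>1 ` {0..16}. norm x \<le> P1" unfolding bounded_iff by blast
  have "compact (\<phi>2 ` {0..16})" using c2 by (intro compact_continuous_image) (auto intro: continuous_on_subset)
  hence "bounded (\<phi>2 ` {0..16})" by (rule compact_imp_bounded)
  then obtain P2 where P2: "\<forall>x\<in>\<phi>2 ` {0..16}. norm x \<le> P2" unfolding bounded_iff by blast
  have "norm (\<phi>1 0) \<le> P1" using P1 by auto
  hence P10: "0 \<le> P1" by (meson norm_ge_zero order_trans)
  have "norm (\<phi>2 0) \<le> P2" using P2 by auto
  hence P20: "0 \<le> P2" by (meson norm_ge_zero order_trans)
  show ?thesis
  proof (rule that[of \<phi>1 P1 P2])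
    show "\<And>s t. 0 < s \<Longrightarrow> s \<le> 16 \<Longrightarrow> 0 < t \<Longrightarrow> t \<le> 16 \<Longrightarrow> \<bar>\<phi>1 s - \<phi>1 t\<bar> \<le> P2 * \<bar>s - t\<bar>"
    proof -
      fix s t :: real assume st: "0 < s" "s \<le> 16" "0 < t" "t \<le> 16"
      show "\<bar>\<phi>1 s - \<phi>1 t\<bar> \<le> P2 * \<bar>s - t\<bar>"
      proof (rule lip_mvt[where f' = \<phi>2])
        fix x assume "min t s \<le> x" "x \<le> max t s"
        with st have x: "0 < x" "x \<le> 16" by auto
        show "(\<phi>1 has_real_derivative \<phi>2 x) (at x)" using at x by auto
        show "\<bar>\<phi>2 x\<bar> \<le> P2" using P2 x by auto
      qed
    qed
  qed (use at P1 P10 P20 c0 in auto)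
qed

lemma G_var:
  fixes \<phi> \<phi>1 :: "real \<Rightarrow> real"
  assumes z0: "\<And>t. 0 \<le> t \<Longrightarrow> t < 1/4 \<Longrightarrow> \<phi> t = 0"
    and one: "\<And>t. 4 \<le> t \<Longrightarrow> \<phi> t = 1"
    and der: "\<And>t. 0 < t \<Longrightarrow> (\<phi> has_real_derivative \<phi>1 t) (at t)"
    and P1: "\<And>t. 0 \<le> t \<Longrightarrow> t \<le> 16 \<Longrightarrow> \<bar>\<phi>1 t\<bar> \<le> P1"
    and P2: "\<And>s t. 0 < s \<Longrightarrow> s \<le> 16 \<Longrightarrow> 0 < t \<Longrightarrow> t \<le> 16 \<Longrightarrow> \<bar>\<phi>1 s - \<phi>1 t\<bar> \<le> P2 * \<bar>s - t\<bar>"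
    and P10: "0 \<le> P1" and P20: "0 \<le> P2"
    and ab: "0 < a" "0 < b" "a \<le> 4 * b" "b \<le> 4 * a"
    and s0: "\<And>m. 0 \<le> s m" and smono: "\<And>m. s m \<le> s (m+1)"
  shows "var N (\<lambda>m. \<phi> (a * s m) - \<phi> (b * s m)) \<le> \<bar>a - b\<bar> * (P1 + 16 * P2) * (4 / min a b)"
proof -
  define \<alpha> where "\<alpha> = 1 / (8 * max a b)"
  define \<beta> where "\<beta> = 4 / min a b"
  define G where "G x = \<phi> (a * x) - \<phi> (b * x)" for x
  define c where "c m = max \<alpha> (min \<beta> (s m))" for m
  define L where "L = \<bar>a - b\<bar> * (P1 + 16 * P2)"
  have mpos: "0 < min a b" "0 < max a b" using ab by auto
  have al0: "0 < \<alpha>" unfolding \<alpha>_def using mpos by simp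
  have aal: "a * \<alpha> \<le> 1/8" "b * \<alpha> \<le> 1/8" unfolding \<alpha>_def using ab by (auto simp: field_simps max_def)
  have abe: "a * \<beta> \<le> 16" "b * \<beta> \<le> 16" "4 \<le> a * \<beta>" "4 \<le> b * \<beta>"
    unfolding \<beta>_def using ab by (auto simp: field_simps min_def)
  have alb: "\<alpha> \<le> \<beta>"
  proof -
    have "a * \<alpha> \<le> a * \<beta>" using aal abe by linarith
    thus ?thesis using ab by simp
  qed
  have Gc: "G (s m) = G (c m)" for m
  proof (cases "s m < \<alpha>")
    case True
    hence cm: "c m = \<alpha>" unfolding c_def using alb by auto
    have "a * s m \<le> a * \<alpha>" "b * s m \<le> b * \<alpha>" using True ab by auto
    hence "a * s m < 1/4" "b * s m < 1/4" "a * \<alpha> < 1/4" "b * \<alpha> < 1/4" using aal by linarith+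
    moreover have "0 \<le> a * s m" "0 \<le> b * s m" "0 \<le> a * \<alpha>" "0 \<le> b * \<alpha>" using s0[of m] ab al0 by auto
    ultimately have "\<phi> (a * s m) = 0" "\<phi> (b * s m) = 0" "\<phi> (a * \<alpha>) = 0" "\<phi> (b * \<alpha>) = 0"
      using z0 by blast+
    then show ?thesis unfolding G_def cm by simp
  next
    case False
    show ?thesis
    proof (cases "s m > \<beta>")
      case True
      hence cm: "c m = \<beta>" unfolding c_def using alb by auto
      have "a * \<beta> \<le> a * s m" "b * \<beta> \<le> b * s m" using True ab by auto
      hence "\<phi> (a * s m) = 1" "\<phi> (b * s m) = 1" "\<phi> (a * \<beta>) = 1" "\<phi> (b * \<beta>) = 1"
        using abe by (auto intro!: one)
      then show ?thesis unfolding G_def cm by simp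
    next
      case False2: False
      hence "c m = s m" unfolding c_def using False by auto
      then show ?thesis by simp
    qed
  qed
  have L0: "0 \<le> L" unfolding L_def using P10 P20 by simp
  have lip: "\<bar>G x - G y\<bar> \<le> L * \<bar>x - y\<bar>" if "\<alpha> \<le> x" "x \<le> \<beta>" "\<alpha> \<le> y" "y \<le> \<beta>" for x y
  proof (rule lip_mvt[where f' = "\<lambda>t. \<phi>1 (a * t) * a - \<phi>1 (b * t) * b"])
    fix t assume "min y x \<le> t" "t \<le> max y x"
    with that have t: "\<alpha> \<le> t" "t \<le> \<beta>" by auto
    hence tp: "0 < t" using al0 by simp
    have at: "a * t \<le> 16" "b * t \<le> 16"
      using abe t ab by (smt (verit) mult_left_mono)+
    show "(G has_real_derivative \<phi>1 (a * t) * a - \<phi>1 (b * t) * b) (at t)"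
      unfolding G_def using tp ab
      by (intro DERIV_diff DERIV_chain2[OF der] DERIV_cmult_Id) auto
    have "\<bar>\<phi>1 (a * t) * a - \<phi>1 (b * t) * b\<bar> = \<bar>(a - b) * \<phi>1 (a * t) + b * (\<phi>1 (a * t) - \<phi>1 (b * t))\<bar>"
      by (simp add: algebra_simps)
    also have "\<dots> \<le> \<bar>a - b\<bar> * \<bar>\<phi>1 (a * t)\<bar> + b * \<bar>\<phi>1 (a * t) - \<phi>1 (b * t)\<bar>"
      using ab abs_triangle_ineq[of "(a - b) * \<phi>1 (a * t)" "b * (\<phi>1 (a * t) - \<phi>1 (b * t))"] by (simp add: abs_mult)
    also have "\<dots> \<le> \<bar>a - b\<bar> * P1 + b * (P2 * \<bar>a * t - b * t\<bar>)"
      using ab tp at by (intro add_mono mult_left_mono P1 P2) auto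
    also have "b * (P2 * \<bar>a * t - b * t\<bar>) = (b * t) * P2 * \<bar>a - b\<bar>"
    proof -
      have "\<bar>a * t - b * t\<bar> = \<bar>a - b\<bar> * t" using tp by (simp add: abs_mult flip: left_diff_distrib)
      thus ?thesis by (simp add: mult_ac)
    qed
    also have "\<dots> \<le> 16 * P2 * \<bar>a - b\<bar>" using at P20 by (intro mult_right_mono) auto
    finally show "\<bar>\<phi>1 (a * t) * a - \<phi>1 (b * t) * b\<bar> \<le> L" unfolding L_def by (simp add: algebra_simps)
  qed
  have "var N (\<lambda>m. \<phi> (a * s m) - \<phi> (b * s m)) = var N (\<lambda>m. G (c m))"
    unfolding var_def using Gc by (simp add: G_def)
  also have "\<dots> \<le> L * (\<beta> - \<alpha>)"
  proof (rule var_lip[OF _ _ _ lip L0])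
    fix m
    show "c m \<le> c (m+1)" unfolding c_def using smono[of m] by auto
    show "\<alpha> \<le> c m" "c m \<le> \<beta>" unfolding c_def using alb by auto
  qed auto
  also have "\<dots> \<le> L * \<beta>" using L0 al0 by (intro mult_left_mono) auto
  finally show ?thesis unfolding L_def \<beta>_def .
qed

lemma inv_sq_mono:
  fixes e :: "int \<Rightarrow> real"
  assumes "\<And>m. 0 < e m" "\<And>m. e (m+1) < e m"
  shows "1 / (e m)^2 \<le> 1 / (e (m+1))^2"
proof -
  have "(e (m+1))^2 \<le> (e m)^2" using assms[of m] assms(1)[of "m+1"] by (intro power_mono) auto
  thus ?thesis using assms(1)[of "m+1"] assms(1)[of m] by (intro divide_left_mono) (auto intro!: mult_pos_pos)
qed

lemma pw_var:
  fixes K :: "'a::euclidean_space \<Rightarrow> real" and \<phi> \<phi>1 :: "real \<Rightarrow> real" and e :: "int \<Rightarrow> real"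
  assumes Kb: "\<And>x. x \<noteq> 0 \<Longrightarrow> \<bar>K x\<bar> \<le> CK / norm x ^ n"
    and der: "\<And>x i. x \<noteq> 0 \<Longrightarrow> i \<in> Basis \<Longrightarrow> ((\<lambda>t. K (x + t *\<^sub>R i)) has_real_derivative D1 i x) (at 0)"
    and bnd: "\<And>x i. x \<noteq> 0 \<Longrightarrow> i \<in> Basis \<Longrightarrow> \<bar>D1 i x\<bar> \<le> CK / norm x ^ (n+1)"
    and CK: "0 \<le> CK"
    and rng: "\<And>t. 0 \<le> t \<Longrightarrow> 0 \<le> \<phi> t \<and> \<phi> t \<le> 1"
    and z0: "\<And>t. 0 \<le> t \<Longrightarrow> t < 1/4 \<Longrightarrow> \<phi> t = 0"
    and one: "\<And>t. 4 \<le> t \<Longrightarrow> \<phi> t = 1"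
    and mono: "\<And>s t. 0 \<le> s \<Longrightarrow> s \<le> t \<Longrightarrow> \<phi> s \<le> \<phi> t"
    and dphi: "\<And>t. 0 < t \<Longrightarrow> (\<phi> has_real_derivative \<phi>1 t) (at t)"
    and P1: "\<And>t. 0 \<le> t \<Longrightarrow> t \<le> 16 \<Longrightarrow> \<bar>\<phi>1 t\<bar> \<le> P1"
    and P2: "\<And>s t. 0 < s \<Longrightarrow> s \<le> 16 \<Longrightarrow> 0 < t \<Longrightarrow> t \<le> 16 \<Longrightarrow> \<bar>\<phi>1 s - \<phi>1 t\<bar> \<le> P2 * \<bar>s - t\<bar>"
    and P10: "0 \<le> P1" and P20: "0 \<le> P2"
    and r: "0 < r" and u: "r < norm u" and v: "r < norm v" and uv: "norm (u - v) \<le> 2 * r"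
    and e: "\<And>m. 0 < e m" "\<And>m. e (m+1) < e m"
  shows "var N (\<lambda>m. \<phi> (norm u^2/(e m)^2) * K u - \<phi> (norm v^2/(e m)^2) * K v)
     \<le> (2*CK*(4*real DIM('a))^(n+1) + CK*2^(n+2)*real DIM('a) + 96*2^n*CK*(P1+16*P2)) * r / norm u^(n+1)"
proof -
  define U where "U = norm u"
  define V where "V = norm v"
  define dd where "dd = real DIM('a)"
  define A where "A = 2*CK*(4*dd)^(n+1) + CK*2^(n+2)*dd + 96*2^n*CK*(P1+16*P2)"
  define s where "s m = 1 / (e m)^2" for m
  define fa where "fa m = \<phi> (U^2 * s m)" for m
  define fb where "fb m = \<phi> (V^2 * s m)" for m
  have U0: "0 < U" and V0: "0 < V" using u v r unfolding U_def V_def by auto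
  have dd1: "1 \<le> dd" unfolding dd_def by simp
  have s0: "0 \<le> s m" for m unfolding s_def by simp
  have sm: "s m \<le> s (m+1)" for m unfolding s_def by (rule inv_sq_mono) (rule e)+
  have eq: "(\<lambda>m. \<phi> (norm u^2/(e m)^2) * K u - \<phi> (norm v^2/(e m)^2) * K v) = (\<lambda>m. fa m * K u - fb m * K v)"
    unfolding fa_def fb_def s_def U_def V_def by (simp add: field_simps)
  have varf: "var N (\<lambda>m. \<phi> (W^2 * s m)) \<le> 1" for W :: real
  proof -
    have "var N (\<lambda>m. \<phi> (W^2 * s m)) \<le> 1 - 0"
    proof (rule var_mono)
      fix m
      show "\<phi> (W\<^sup>2 * s m) \<le> \<phi> (W\<^sup>2 * s (m + 1))" using s0 sm by (intro mono mult_left_mono) auto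
      show "0 \<le> \<phi> (W\<^sup>2 * s m)" "\<phi> (W\<^sup>2 * s m) \<le> 1" using rng[of "W^2 * s m"] s0[of m] by auto
    qed
    thus ?thesis by simp
  qed
  have varfa: "var N fa \<le> 1" using varf[of U] unfolding fa_def .
  have varfb: "var N fb \<le> 1" using varf[of V] unfolding fb_def .
  have Ku: "\<bar>K u\<bar> \<le> CK / U^n" using Kb[of u] U0 unfolding U_def by auto
  have Kv: "\<bar>K v\<bar> \<le> CK / V^n" using Kb[of v] V0 unfolding V_def by auto
  have A0: "0 \<le> 2*CK*(4*dd)^(n+1)" "0 \<le> CK*2^(n+2)*dd" "0 \<le> 96*2^n*CK*(P1+16*P2)"
    using CK P10 P20 dd1 by auto
  have "var N (\<lambda>m. fa m * K u - fb m * K v) \<le> A * r / U^(n+1)"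
  proof (cases "U \<le> 4 * dd * r")
    case True
    have "var N (\<lambda>m. fa m * K u - fb m * K v) = var N (\<lambda>m. K u * fa m - K v * fb m)"
      by (simp add: mult.commute)
    also have "\<dots> \<le> var N (\<lambda>m. K u * fa m) + var N (\<lambda>m. K v * fb m)" by (rule var_diff)
    also have "\<dots> = \<bar>K u\<bar> * var N fa + \<bar>K v\<bar> * var N fb" by (simp add: var_cmult)
    also have "\<dots> \<le> \<bar>K u\<bar> * 1 + \<bar>K v\<bar> * 1"
      using varfa varfb by (intro add_mono mult_left_mono) auto
    also have "\<dots> \<le> CK / r^n + CK / r^n"
    proof -
      have "CK / U^n \<le> CK / r^n" "CK / V^n \<le> CK / r^n"
        using CK r u v unfolding U_def V_def by (auto intro!: divide_left_mono power_mono mult_pos_pos zero_less_power)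
      thus ?thesis using Ku Kv by simp
    qed
    also have "\<dots> = 2*CK*(4*dd)^(n+1) * r / ((4*dd*r)^(n+1))"
      using r dd1 by (simp add: power_mult_distrib field_simps)
    also have "\<dots> \<le> 2*CK*(4*dd)^(n+1) * r / U^(n+1)"
      using True U0 A0 r CK dd1 by (intro divide_left_mono power_mono mult_pos_pos zero_less_power mult_nonneg_nonneg) auto
    also have "\<dots> \<le> A * r / U^(n+1)"
      unfolding A_def using A0 r U0 by (intro divide_right_mono mult_right_mono) auto
    finally show ?thesis .
  next
    case False
    define a where "a = U^2"
    define b where "b = V^2"
    have far: "4 * dd * r < U" using False by simp
    have r4: "4 * r \<le> 4 * dd * r" using dd1 r by simp
    have VU: "U - 2*r \<le> V" "V \<le> U + 2*r" unfolding U_def V_def using uv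
      by (metis norm_triangle_ineq2 norm_minus_commute add.commute diff_le_eq order_trans abs_le_iff)+
    have V2: "U / 2 \<le> V" "V \<le> 2 * U" using VU far r4 by linarith+
    have a0: "0 < a" "0 < b" unfolding a_def b_def using U0 V0 by auto
    have ab4: "a \<le> 4 * b" "b \<le> 4 * a"
    proof -
      have "U^2 \<le> (2*V)^2" using V2 U0 by (intro power_mono) auto
      thus "a \<le> 4 * b" unfolding a_def b_def by (simp add: power_mult_distrib)
      have "V^2 \<le> (2*U)^2" using V2 V0 by (intro power_mono) auto
      thus "b \<le> 4 * a" unfolding a_def b_def by (simp add: power_mult_distrib)
    qed
    have Gv: "var N (\<lambda>m. fa m - fb m) \<le> \<bar>a - b\<bar> * (P1 + 16 * P2) * (4 / min a b)"
      unfolding fa_def fb_def a_def[symmetric] b_def[symmetric]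
      using G_var[of \<phi> \<phi>1 P1 P2 a b s N] z0 one dphi P1 P2 P10 P20 a0 ab4 s0 sm by blast
    have abd: "\<bar>a - b\<bar> \<le> 6 * r * U"
    proof -
      have "a - b = (U + V) * (U - V)" unfolding a_def b_def by (simp add: power2_eq_square algebra_simps)
      hence "\<bar>a - b\<bar> = (U + V) * \<bar>U - V\<bar>" using U0 V0 by (simp add: abs_mult)
      also have "\<dots> \<le> (3 * U) * (2 * r)" using V2 VU U0 V0 by (intro mult_mono) auto
      finally show ?thesis by (simp add: mult_ac)
    qed
    have minb: "4 / min a b \<le> 16 / U^2"
    proof -
      have "U^2 / 4 \<le> min a b" using ab4 unfolding a_def by auto
      hence "4 / min a b \<le> 4 / (U^2/4)" using U0 a0 by (intro divide_left_mono) auto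
      thus ?thesis by simp
    qed
    have Gv2: "var N (\<lambda>m. fa m - fb m) \<le> 96 * (P1 + 16 * P2) * r / U"
    proof -
      have "\<bar>a - b\<bar> * (P1 + 16 * P2) * (4 / min a b) \<le> (6 * r * U) * (P1 + 16 * P2) * (16 / U^2)"
        using abd minb P10 P20 a0 U0 r by (intro mult_mono) auto
      also have "\<dots> = 96 * (P1 + 16 * P2) * r / U" using U0 by (simp add: power2_eq_square field_simps)
      finally show ?thesis using Gv by linarith
    qed
    have Kuv: "\<bar>K v - K u\<bar> \<le> CK*2^(n+2)*dd * r / U^(n+1)"
    proof -
      have "dd * norm (u - v) \<le> dd * (2 * r)" using uv dd1 by (intro mult_left_mono) auto
      moreover have "real DIM('a) * norm (v - u) = dd * norm (u - v)" unfolding dd_def by (simp add: norm_minus_commute)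
      ultimately have cl: "real DIM('a) * norm (v - u) \<le> norm u / 2"
        using far unfolding U_def by linarith
      have "\<bar>K v - K u\<bar> \<le> CK * (2 / U)^(n+1) * (dd * norm (v - u))"
        using K_lip[OF der bnd CK _ cl] U0 unfolding U_def dd_def by auto
      also have "\<dots> \<le> CK * (2 / U)^(n+1) * (dd * (2 * r))"
        using uv CK U0 dd1 by (intro mult_left_mono) (auto simp: norm_minus_commute)
      also have "\<dots> = CK*2^(n+2)*dd * r / U^(n+1)" by (simp add: power_divide field_simps)
      finally show ?thesis .
    qed
    have Kv2: "\<bar>K v\<bar> \<le> CK * 2^n / U^n"
    proof -
      have "CK / V^n \<le> CK / (U/2)^n" using V2 U0 CK by (intro divide_left_mono power_mono) auto
      thus ?thesis using Kv by (simp add: power_divide)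
    qed
    have "var N (\<lambda>m. fa m * K u - fb m * K v) = var N (\<lambda>m. (K u - K v) * fa m + K v * (fa m - fb m))"
      by (simp add: algebra_simps)
    also have "\<dots> \<le> var N (\<lambda>m. (K u - K v) * fa m) + var N (\<lambda>m. K v * (fa m - fb m))" by (rule var_add)
    also have "\<dots> = \<bar>K u - K v\<bar> * var N fa + \<bar>K v\<bar> * var N (\<lambda>m. fa m - fb m)"
      by (simp add: var_cmult)
    also have "\<dots> \<le> (CK*2^(n+2)*dd * r / U^(n+1)) * 1 + (CK * 2^n / U^n) * (96 * (P1 + 16 * P2) * r / U)"
      using Kuv Kv2 varfa Gv2 var_nonneg by (intro add_mono mult_mono) (auto simp: abs_minus_commute)
    also have "\<dots> = (CK*2^(n+2)*dd + 96*2^n*CK*(P1+16*P2)) * r / U^(n+1)"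
      using U0 by (simp add: field_simps)
    also have "\<dots> \<le> A * r / U^(n+1)"
      unfolding A_def using A0 r U0 by (intro divide_right_mono mult_right_mono) auto
    finally show ?thesis .
  qed
  thus ?thesis unfolding eq A_def U_def dd_def .
qed

lemma K_cont:
  fixes K :: "'a::euclidean_space \<Rightarrow> real"
  assumes der: "\<And>x i. x \<noteq> 0 \<Longrightarrow> i \<in> Basis \<Longrightarrow> ((\<lambda>t. K (x + t *\<^sub>R i)) has_real_derivative D1 i x) (at 0)"
    and bnd: "\<And>x i. x \<noteq> 0 \<Longrightarrow> i \<in> Basis \<Longrightarrow> \<bar>D1 i x\<bar> \<le> CK / norm x ^ (n+1)"
    and CK: "0 \<le> CK" and w: "w \<noteq> 0"
  shows "isCont K w"
  unfolding isCont_def LIM_eq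
proof (intro allI impI)
  fix \<epsilon> :: real assume \<epsilon>: "0 < \<epsilon>"
  define dd where "dd = real DIM('a)"
  define Lc where "Lc = CK * (2 / norm w)^(n+1) * dd"
  have dd1: "1 \<le> dd" unfolding dd_def by simp
  have nw: "0 < norm w" using w by simp
  have Lc0: "0 \<le> Lc" unfolding Lc_def using CK dd1 nw by simp
  define s where "s = min (norm w / (2 * dd)) (\<epsilon> / (Lc + 1))"
  have s0: "0 < s" unfolding s_def using nw dd1 \<epsilon> Lc0 by simp
  show "\<exists>s>0. \<forall>x. x \<noteq> w \<and> norm (x - w) < s \<longrightarrow> norm (K x - K w) < \<epsilon>"
  proof (intro exI[of _ s] conjI allI impI s0)
    fix x assume x: "x \<noteq> w \<and> norm (x - w) < s"
    have "norm (x - w) \<le> norm w / (2 * dd)" using x unfolding s_def by simp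
    hence cl: "real DIM('a) * norm (x - w) \<le> norm w / 2" using dd1 unfolding dd_def[symmetric]
      by (simp add: field_simps)
    have "\<bar>K x - K w\<bar> \<le> CK * (2 / norm w)^(n+1) * (real DIM('a) * norm (x - w))"
      by (rule K_lip[OF der bnd CK w cl])
    also have "\<dots> = Lc * norm (x - w)" unfolding Lc_def dd_def by simp
    also have "\<dots> \<le> Lc * s" using x Lc0 by (intro mult_left_mono) auto
    also have "\<dots> < (Lc + 1) * (\<epsilon> / (Lc + 1))"
    proof -
      have "Lc * s \<le> Lc * (\<epsilon> / (Lc + 1))" using Lc0 unfolding s_def by (intro mult_left_mono) auto
      also have "\<dots> < (Lc + 1) * (\<epsilon> / (Lc + 1))" using \<epsilon> Lc0 by (intro mult_strict_right_mono) auto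
      finally show ?thesis .
    qed
    also have "\<dots> = \<epsilon>" using Lc0 by simp
    finally show "norm (K x - K w) < \<epsilon>" by simp
  qed
qed

definition gE :: "(real \<Rightarrow> real) \<Rightarrow> ('a::euclidean_space \<Rightarrow> real) \<Rightarrow> real \<Rightarrow> 'a \<Rightarrow> real" where
  "gE \<phi> K \<epsilon> w = phi_eps \<phi> \<epsilon> w * K w"

lemma g_cont:
  fixes K :: "'a::euclidean_space \<Rightarrow> real" and \<phi> \<phi>1 :: "real \<Rightarrow> real"
  assumes der: "\<And>x i. x \<noteq> 0 \<Longrightarrow> i \<in> Basis \<Longrightarrow> ((\<lambda>t. K (x + t *\<^sub>R i)) has_real_derivative D1 i x) (at 0)"
    and bnd: "\<And>x i. x \<noteq> 0 \<Longrightarrow> i \<in> Basis \<Longrightarrow> \<bar>D1 i x\<bar> \<le> CK / norm x ^ (n+1)"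
    and CK: "0 \<le> CK"
    and z0: "\<And>t. 0 \<le> t \<Longrightarrow> t < 1/4 \<Longrightarrow> \<phi> t = 0"
    and dphi: "\<And>t. 0 < t \<Longrightarrow> (\<phi> has_real_derivative \<phi>1 t) (at t)"
    and \<epsilon>: "0 < \<epsilon>"
  shows "continuous_on UNIV (gE \<phi> K \<epsilon>)"
proof (intro continuous_at_imp_continuous_on ballI)
  fix w :: 'a
  show "isCont (gE \<phi> K \<epsilon>) w"
  proof (cases "w = 0")
    case False
    have "isCont \<phi> (norm w ^ 2 / \<epsilon> ^ 2)" using False \<epsilon> by (intro DERIV_isCont[OF dphi]) auto
    moreover have "isCont (\<lambda>w. norm w ^ 2 / \<epsilon> ^ 2) w" using \<epsilon> by (intro continuous_intros) auto
    ultimately have "isCont (\<lambda>w. \<phi> (norm w ^ 2 / \<epsilon> ^ 2)) w" by (rule isCont_o2[rotated])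
    moreover have "isCont K w" by (rule K_cont[OF der bnd CK False])
    ultimately show ?thesis unfolding gE_def phi_eps_def by (intro isCont_mult)
  next
    case True
    have zero: "gE \<phi> K \<epsilon> x = 0" if "norm x < \<epsilon> / 2" for x
    proof -
      have "norm x ^ 2 < (\<epsilon>/2)^2" using that by (intro power_strict_mono) auto
      hence "norm x ^ 2 / \<epsilon> ^ 2 < 1/4" using \<epsilon> by (simp add: field_simps power_divide)
      hence "\<phi> (norm x ^ 2 / \<epsilon> ^ 2) = 0" by (intro z0) auto
      thus ?thesis unfolding gE_def phi_eps_def by simp
    qed
    show ?thesis unfolding isCont_def LIM_eq
    proof (intro allI impI)
      fix e :: real assume "0 < e"
      show "\<exists>s>0. \<forall>x. x \<noteq> w \<and> norm (x - w) < s \<longrightarrow> norm (gE \<phi> K \<epsilon> x - gE \<phi> K \<epsilon> w) < e"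
        using zero[of w] zero True \<open>0 < e\<close> \<epsilon> by (intro exI[of _ "\<epsilon>/2"]) auto
    qed
  qed
qed

lemma dyad_aux:
  fixes r d :: real
  assumes r: "0 < r" and d: "r < d"
  shows "r / d^(n+1) \<le> (\<Sum>k<K. r / (2^k*r)^(n+1) * indicator {..<2^(k+1)*r} d)
            + (if 2^K*r \<le> d then r / d^(n+1) else 0)"
proof (induction K)
  case 0
  then show ?case using d by simp
next
  case (Suc K)
  have d0: "0 < d" using r d by simp
  show ?case
  proof (cases "2^K*r \<le> d")
    case True
    show ?thesis
    proof (cases "d < 2^(K+1)*r")
      case True2: True
      have "r / d^(n+1) \<le> r / (2^K*r)^(n+1)"
        using True r d0 by (intro divide_left_mono power_mono mult_pos_pos zero_less_power) auto
      hence "(if 2^K*r \<le> d then r / d^(n+1) else 0) \<le> r / (2^K*r)^(n+1) * indicator {..<2^(K+1)*r} d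
               + (if 2^(Suc K)*r \<le> d then r / d^(n+1) else 0)"
        using True True2 by simp
      then show ?thesis using Suc by simp
    next
      case False
      hence "(if 2^K*r \<le> d then r / d^(n+1) else 0) \<le> r / (2^K*r)^(n+1) * indicator {..<2^(K+1)*r} d
               + (if 2^(Suc K)*r \<le> d then r / d^(n+1) else 0)"
        using True by simp
      then show ?thesis using Suc by simp
    qed
  next
    case False
    have "2^K*r \<le> 2^(Suc K)*r" using r by simp
    hence "\<not> 2^(Suc K)*r \<le> d" using False by linarith
    hence "(if 2^K*r \<le> d then r / d^(n+1) else 0) \<le> r / (2^K*r)^(n+1) * indicator {..<2^(K+1)*r} d
               + (if 2^(Suc K)*r \<le> d then r / d^(n+1) else 0)"
      using False r by (simp add: indicator_def)
    then show ?thesis using Suc by simp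
  qed
qed

lemma dyad:
  fixes r d :: real
  assumes r: "0 < r" and d: "r < d"
  shows "r / d^(n+1) \<le> (\<Sum>k<K. r / (2^k*r)^(n+1) * indicator {..<2^(k+1)*r} d) + r / (2^K*r)^(n+1)"
proof -
  have "r / d^(n+1) \<le> r / (2^K*r)^(n+1)" if "2^K*r \<le> d"
  proof -
    have "0 < 2^K*r" using r by simp
    thus ?thesis using that r d by (intro divide_left_mono power_mono mult_pos_pos zero_less_power) auto
  qed
  hence "(if 2^K*r \<le> d then r / d^(n+1) else 0) \<le> r / (2^K*r)^(n+1)"
    using r by auto
  thus ?thesis using dyad_aux[OF r d, of n K] by linarith
qed

lemma geo_id:
  fixes r :: real assumes r: "0 < r"
  shows "r / (2^k*r)^(n+1) * (2^(k+1)*r)^n = 2^n * (1/2)^k"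
  using r by (simp add: power_mult_distrib power_add field_simps flip: power_mult)

lemma int_one:
  fixes \<nu> :: "'a::euclidean_space measure"
  assumes fm: "finite_measure \<nu>" and sb: "sets \<nu> = sets borel" and r: "0 < r"
    and Sd: "\<And>y. y \<in> S \<Longrightarrow> r < dist x y"
  shows "(\<integral>y. indicator S y * (r / norm (x - y)^(n+1)) \<partial>\<nu>)
     \<le> (\<Sum>k<K. r/(2^k*r)^(n+1) * measure \<nu> (ball x (2^(k+1)*r))) + r/(2^K*r)^(n+1) * measure \<nu> UNIV"
proof -
  interpret finite_measure \<nu> by (rule fm)
  have sp: "space \<nu> = UNIV" using sets_eq_imp_space_eq[OF sb] by simp
  have bs: "ball x R \<in> sets \<nu>" for R using sb by simp
  define h where "h y = (\<Sum>k<K. r/(2^k*r)^(n+1) * indicator (ball x (2^(k+1)*r)) y) + r/(2^K*r)^(n+1)" for y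
  have hi: "integrable \<nu> h" unfolding h_def
    using bs by (intro Bochner_Integration.integrable_add Bochner_Integration.integrable_sum Bochner_Integration.integrable_mult_right integrable_real_indicator integrable_const) (auto simp: less_top[symmetric] emeasure_finite)
  have "(\<integral>y. indicator S y * (r / norm (x - y)^(n+1)) \<partial>\<nu>) \<le> (\<integral>y. h y \<partial>\<nu>)"
  proof (rule integral_mono'[OF hi])
    fix y assume "y \<in> space \<nu>"
    show "0 \<le> h y" unfolding h_def using r by (intro add_nonneg_nonneg sum_nonneg) auto
    show "indicator S y * (r / norm (x - y)^(n+1)) \<le> h y"
    proof (cases "y \<in> S")
      case True
      have "r / norm (x - y)^(n+1) \<le> (\<Sum>k<K. r / (2^k*r)^(n+1) * indicator {..<2^(k+1)*r} (norm (x - y))) + r / (2^K*r)^(n+1)"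
        using dyad[OF r, of "norm (x - y)"] Sd[OF True] by (simp add: dist_norm)
      also have "\<dots> = h y" unfolding h_def by (simp add: indicator_def dist_norm)
      finally show ?thesis using True by simp
    next
      case False
      thus ?thesis using \<open>0 \<le> h y\<close> by simp
    qed
  qed
  also have "(\<integral>y. h y \<partial>\<nu>) = (\<Sum>k<K. r/(2^k*r)^(n+1) * measure \<nu> (ball x (2^(k+1)*r))) + r/(2^K*r)^(n+1) * measure \<nu> UNIV"
  proof -
    have i1: "integrable \<nu> (\<lambda>y. \<Sum>k<K. r/(2^k*r)^(n+1) * indicator (ball x (2^(k+1)*r)) y)"
      using bs by (intro Bochner_Integration.integrable_sum Bochner_Integration.integrable_mult_right integrable_real_indicator) (auto simp: less_top[symmetric] emeasure_finite)
    have "(\<integral>y. h y \<partial>\<nu>) = (\<integral>y. (\<Sum>k<K. r/(2^k*r)^(n+1) * indicator (ball x (2^(k+1)*r)) y) \<partial>\<nu>) + (\<integral>y. r/(2^K*r)^(n+1) \<partial>\<nu>)"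
      unfolding h_def by (rule Bochner_Integration.integral_add[OF i1 integrable_const])
    also have "(\<integral>y. (\<Sum>k<K. r/(2^k*r)^(n+1) * indicator (ball x (2^(k+1)*r)) y) \<partial>\<nu>)
        = (\<Sum>k<K. (\<integral>y. r/(2^k*r)^(n+1) * indicator (ball x (2^(k+1)*r)) y \<partial>\<nu>))"
      using bs by (intro Bochner_Integration.integral_sum Bochner_Integration.integrable_mult_right integrable_real_indicator) (auto simp: less_top[symmetric] emeasure_finite)
    also have "\<dots> = (\<Sum>k<K. r/(2^k*r)^(n+1) * measure \<nu> (ball x (2^(k+1)*r)))"
      using sp by simp
    also have "(\<integral>y. r/(2^K*r)^(n+1) \<partial>\<nu>) = r/(2^K*r)^(n+1) * measure \<nu> UNIV"
      using sp by (simp add: mult.commute)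
    finally show ?thesis .
  qed
  finally show ?thesis .
qed

lemma half_sum: "(\<Sum>k<K. (1/2::real)^k) = 2 - 2 * (1/2)^K"
  by (induction K) auto

lemma int_bound:
  fixes \<nu>1 \<nu>2 :: "'a::euclidean_space measure"
  assumes fm1: "finite_measure \<nu>1" and sb1: "sets \<nu>1 = sets borel"
    and fm2: "finite_measure \<nu>2" and sb2: "sets \<nu>2 = sets borel" and r: "0 < r"
    and Sd: "\<And>y. y \<in> S \<Longrightarrow> r < dist x y"
    and MC: "0 \<le> MC"
    and Mb: "\<And>R. 0 < R \<Longrightarrow> measure \<nu>1 (ball x R) + measure \<nu>2 (ball x R) \<le> MC * R^n"
  shows "(\<integral>y. indicator S y * (r / norm (x - y)^(n+1)) \<partial>\<nu>1) + (\<integral>y. indicator S y * (r / norm (x - y)^(n+1)) \<partial>\<nu>2)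
     \<le> 2^(n+1) * MC"
proof (rule ccontr)
  define X where "X = (\<integral>y. indicator S y * (r / norm (x - y)^(n+1)) \<partial>\<nu>1) + (\<integral>y. indicator S y * (r / norm (x - y)^(n+1)) \<partial>\<nu>2)"
  define T where "T = measure \<nu>1 UNIV + measure \<nu>2 UNIV"
  define B where "B = 2^(n+1) * MC"
  assume "\<not> ?thesis"
  hence XB: "B < X" unfolding X_def B_def by simp
  have T0: "0 \<le> T" unfolding T_def by simp
  have rn: "0 < r^n" using r by simp
  have bound: "X \<le> B + (1/2)^K * (T / r^n)" for K
  proof -
    define c where "c k = r/(2^k*r)^(n+1)" for k :: nat
    have c0: "0 \<le> c k" for k unfolding c_def using r by simp
    have "X \<le> ((\<Sum>k<K. c k * measure \<nu>1 (ball x (2^(k+1)*r))) + c K * measure \<nu>1 UNIV)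
            + ((\<Sum>k<K. c k * measure \<nu>2 (ball x (2^(k+1)*r))) + c K * measure \<nu>2 UNIV)"
      unfolding X_def c_def by (intro add_mono int_one[OF fm1 sb1 r Sd] int_one[OF fm2 sb2 r Sd])
    also have "\<dots> = (\<Sum>k<K. c k * (measure \<nu>1 (ball x (2^(k+1)*r)) + measure \<nu>2 (ball x (2^(k+1)*r)))) + c K * T"
      unfolding T_def by (simp add: sum.distrib algebra_simps)
    also have "\<dots> \<le> (\<Sum>k<K. c k * (MC * (2^(k+1)*r)^n)) + c K * T"
      using c0 r by (intro add_mono sum_mono mult_left_mono Mb) auto
    also have "(\<Sum>k<K. c k * (MC * (2^(k+1)*r)^n)) = MC * 2^n * (\<Sum>k<K. (1/2)^k)"
      unfolding c_def sum_distrib_left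
      by (intro sum.cong refl) (metis (no_types) geo_id[OF r] mult.assoc mult.commute)
    also have "\<dots> \<le> B" unfolding B_def half_sum using MC by (simp add: algebra_simps)
    also have "c K * T \<le> (1/2)^K * (T / r^n)"
    proof -
      have "(2::real)^K \<le> (2^K)^(n+1)" by (intro self_le_power) auto
      hence "2^K * r^(n+1) \<le> (2^K * r)^(n+1)" using r by (simp add: power_mult_distrib)
      hence "c K \<le> r / (2^K * r^(n+1))" unfolding c_def using r
        by (intro divide_left_mono mult_pos_pos) auto
      also have "\<dots> = (1/2)^K / r^n" using r by (simp add: power_divide field_simps)
      finally have "c K \<le> (1/2)^K / r^n" .
      hence "c K * T \<le> (1/2)^K / r^n * T" using T0 by (rule mult_right_mono)
      thus ?thesis by simp
    qed
    finally show ?thesis by simp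
  qed
  define y where "y = (X - B) / (T / r^n + 1)"
  have tp: "0 < T / r^n + 1" using divide_nonneg_pos[OF T0 rn] by linarith
  have y0: "0 < y" unfolding y_def using XB tp by simp
  obtain K where K: "(1/2::real)^K < y" using real_arch_pow_inv[OF y0, of "1/2"] by auto
  have "(1/2)^K * (T / r^n) \<le> (1/2)^K * (T / r^n + 1)" by (intro mult_left_mono) auto
  also have "\<dots> < y * (T / r^n + 1)" using K tp by (intro mult_strict_right_mono) auto
  also have "\<dots> = X - B" unfolding y_def using tp by simp
  finally show False using bound[of K] by simp
qed

lemma meas_shift:
  fixes g :: "'a::euclidean_space \<Rightarrow> real"
  assumes c: "continuous_on UNIV g" and sb: "sets \<nu> = sets borel"
  shows "(\<lambda>y. g (w - y)) \<in> borel_measurable \<nu>"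
proof -
  have "continuous_on UNIV (\<lambda>y. g (w - y))"
    by (rule continuous_on_compose2[OF c]) (auto intro!: continuous_intros)
  hence "(\<lambda>y. g (w - y)) \<in> borel_measurable borel" by (rule borel_measurable_continuous_onI)
  thus ?thesis using sb by (simp add: measurable_cong_sets[OF sb refl])
qed

lemma T_eq:
  fixes \<nu>1 \<nu>2 :: "'a::euclidean_space measure"
  assumes sb1: "sets \<nu>1 = sets borel" and sb2: "sets \<nu>2 = sets borel" and S: "S \<in> sets borel"
    and c: "continuous_on UNIV (gE \<phi> K \<epsilon>)"
  shows "T_phi \<phi> K (density \<nu>1 (\<lambda>y. indicator S y :: ennreal)) (density \<nu>2 (\<lambda>y. indicator S y :: ennreal)) \<epsilon> w
     = (\<integral>y. indicator S y * gE \<phi> K \<epsilon> (w - y) \<partial>\<nu>1) - (\<integral>y. indicator S y * gE \<phi> K \<epsilon> (w - y) \<partial>\<nu>2)"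
proof -
  have one: "(\<integral>y. phi_eps \<phi> \<epsilon> (w - y) * K (w - y) \<partial>(density \<nu> (\<lambda>y. indicator S y :: ennreal)))
        = (\<integral>y. indicator S y * gE \<phi> K \<epsilon> (w - y) \<partial>\<nu>)" if sb: "sets \<nu> = sets borel" for \<nu> :: "'a measure"
  proof -
    have d: "density \<nu> (\<lambda>y. indicator S y :: ennreal) = density \<nu> (\<lambda>y. ennreal (indicator S y))"
      by (simp add: ennreal_indicator)
    have Sm: "S \<in> sets \<nu>" using S sb by simp
    have "(\<integral>y. gE \<phi> K \<epsilon> (w - y) \<partial>(density \<nu> (\<lambda>y. ennreal (indicator S y)))) = (\<integral>y. indicator S y *\<^sub>R gE \<phi> K \<epsilon> (w - y) \<partial>\<nu>)"
      by (rule integral_density[OF meas_shift[OF c sb]]) (use Sm in auto)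
    thus ?thesis unfolding d gE_def by simp
  qed
  show ?thesis unfolding T_phi_def one[OF sb1] one[OF sb2] ..
qed

locale setting =
  fixes K :: "'a::euclidean_space \<Rightarrow> real" and \<phi> \<phi>1 :: "real \<Rightarrow> real" and D1 :: "'a \<Rightarrow> 'a \<Rightarrow> real"
    and CK P1 P2 :: real and n :: nat
  assumes Kb: "\<And>x. x \<noteq> 0 \<Longrightarrow> \<bar>K x\<bar> \<le> CK / norm x ^ n"
    and der: "\<And>x i. x \<noteq> 0 \<Longrightarrow> i \<in> Basis \<Longrightarrow> ((\<lambda>t. K (x + t *\<^sub>R i)) has_real_derivative D1 i x) (at 0)"
    and bnd: "\<And>x i. x \<noteq> 0 \<Longrightarrow> i \<in> Basis \<Longrightarrow> \<bar>D1 i x\<bar> \<le> CK / norm x ^ (n+1)"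
    and CK: "0 \<le> CK"
    and rng: "\<And>t. 0 \<le> t \<Longrightarrow> 0 \<le> \<phi> t \<and> \<phi> t \<le> 1"
    and z0: "\<And>t. 0 \<le> t \<Longrightarrow> t < 1/4 \<Longrightarrow> \<phi> t = 0"
    and one: "\<And>t. 4 \<le> t \<Longrightarrow> \<phi> t = 1"
    and mono: "\<And>s t. 0 \<le> s \<Longrightarrow> s \<le> t \<Longrightarrow> \<phi> s \<le> \<phi> t"
    and dphi: "\<And>t. 0 < t \<Longrightarrow> (\<phi> has_real_derivative \<phi>1 t) (at t)"
    and P1: "\<And>t. 0 \<le> t \<Longrightarrow> t \<le> 16 \<Longrightarrow> \<bar>\<phi>1 t\<bar> \<le> P1"
    and P2: "\<And>s t. 0 < s \<Longrightarrow> s \<le> 16 \<Longrightarrow> 0 < t \<Longrightarrow> t \<le> 16 \<Longrightarrow> \<bar>\<phi>1 s - \<phi>1 t\<bar> \<le> P2 * \<bar>s - t\<bar>"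
    and P10: "0 \<le> P1" and P20: "0 \<le> P2"
begin

definition "Acst = 2*CK*(4*real DIM('a))^(n+1) + CK*2^(n+2)*real DIM('a) + 96*2^n*CK*(P1+16*P2)"

lemma Acst0: "0 \<le> Acst" unfolding Acst_def using CK P10 P20 by simp

lemma gcont: "0 < \<epsilon> \<Longrightarrow> continuous_on UNIV (gE \<phi> K \<epsilon>)"
  by (rule g_cont[OF der bnd CK z0 dphi])

lemma gbound: "w \<noteq> 0 \<Longrightarrow> \<bar>gE \<phi> K \<epsilon> w\<bar> \<le> CK / norm w ^ n"
proof -
  assume w: "w \<noteq> 0"
  have "\<bar>gE \<phi> K \<epsilon> w\<bar> = \<bar>\<phi> (norm w ^ 2 / \<epsilon> ^ 2)\<bar> * \<bar>K w\<bar>" unfolding gE_def phi_eps_def by (simp add: abs_mult)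
  also have "\<dots> \<le> 1 * (CK / norm w ^ n)" using rng[of "norm w ^ 2 / \<epsilon> ^ 2"] Kb[OF w]
    by (intro mult_mono) auto
  finally show ?thesis by simp
qed

lemma integ_g:
  fixes \<nu> :: "'a measure"
  assumes fm: "finite_measure \<nu>" and sb: "sets \<nu> = sets borel" and \<epsilon>: "0 < \<epsilon>" and r: "0 < r"
    and S: "S \<in> sets borel" and Sd: "\<And>y. y \<in> S \<Longrightarrow> r < dist w y"
  shows "integrable \<nu> (\<lambda>y. indicator S y * gE \<phi> K \<epsilon> (w - y))"
proof -
  interpret finite_measure \<nu> by (rule fm)
  show ?thesis
  proof (rule integrable_const_bound[where B = "CK / r^n"])
    show "AE y in \<nu>. norm (indicator S y * gE \<phi> K \<epsilon> (w - y)) \<le> CK / r^n"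
    proof (intro AE_I2)
      fix y
      show "norm (indicator S y * gE \<phi> K \<epsilon> (w - y)) \<le> CK / r^n"
      proof (cases "y \<in> S")
        case True
        have d: "r < norm (w - y)" using Sd[OF True] by (simp add: dist_norm)
        hence "\<bar>gE \<phi> K \<epsilon> (w - y)\<bar> \<le> CK / norm (w - y) ^ n" using r by (intro gbound) auto
        also have "\<dots> \<le> CK / r ^ n" using d r CK by (intro divide_left_mono power_mono mult_pos_pos zero_less_power) auto
        finally show ?thesis using True by simp
      qed (use CK r in simp)
    qed
    show "(\<lambda>y. indicator S y * gE \<phi> K \<epsilon> (w - y)) \<in> borel_measurable \<nu>"
      using S sb meas_shift[OF gcont[OF \<epsilon>] sb] by (intro borel_measurable_times) auto
  qed
qed

lemma integ_f:
  fixes \<nu> :: "'a measure"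
  assumes fm: "finite_measure \<nu>" and sb: "sets \<nu> = sets borel" and r: "0 < r"
    and S: "S \<in> sets borel" and Sd: "\<And>y. y \<in> S \<Longrightarrow> r < dist x y"
  shows "integrable \<nu> (\<lambda>y. indicator S y * (r / norm (x - y)^(m+1)))"
proof -
  interpret finite_measure \<nu> by (rule fm)
  show ?thesis
  proof (rule integrable_const_bound[where B = "r / r^(m+1)"])
    show "AE y in \<nu>. norm (indicator S y * (r / norm (x - y)^(m+1))) \<le> r / r^(m+1)"
    proof (intro AE_I2)
      fix y
      show "norm (indicator S y * (r / norm (x - y)^(m+1))) \<le> r / r^(m+1)"
      proof (cases "y \<in> S")
        case True
        have d: "r < norm (x - y)" using Sd[OF True] by (simp add: dist_norm)
        have "r / norm (x - y)^(m+1) \<le> r / r^(m+1)" using d r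
          by (intro divide_left_mono power_mono mult_pos_pos zero_less_power) auto
        thus ?thesis using True r d by simp
      qed (use r in simp)
    qed
    have "(\<lambda>y. indicator S y * (r / norm (x - y)^(m+1))) \<in> borel_measurable borel"
      using S by measurable
    thus "(\<lambda>y. indicator S y * (r / norm (x - y)^(m+1))) \<in> borel_measurable \<nu>"
      by (simp add: measurable_cong_sets[OF sb refl])
  qed
qed


lemma Sd_lemma:
  assumes "w \<in> ball xB r" "y \<in> - ball xB (2*r)"
  shows "r < dist w y"
proof -
  have "dist xB w < r" "2*r \<le> dist xB y" using assms by auto
  moreover have "dist xB y \<le> dist xB w + dist w y" by (rule dist_triangle)
  ultimately show ?thesis by linarith
qed

lemma deltasum:
  fixes \<nu>1 \<nu>2 :: "'a measure" and e :: "int \<Rightarrow> real"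
  assumes fm1: "finite_measure \<nu>1" and sb1: "sets \<nu>1 = sets borel"
    and fm2: "finite_measure \<nu>2" and sb2: "sets \<nu>2 = sets borel"
    and r: "0 < r" and x: "x \<in> ball xB r" and z: "z \<in> ball xB r"
    and MC: "0 \<le> MC" and Mb: "\<And>R. 0 < R \<Longrightarrow> measure \<nu>1 (ball x R) + measure \<nu>2 (ball x R) \<le> MC * R^n"
    and e: "\<And>m. 0 < e m" "\<And>m. e (m+1) < e m"
  defines "S \<equiv> - ball xB (2*r)"
  defines "F \<equiv> \<lambda>w \<epsilon>. T_phi \<phi> K (density \<nu>1 (\<lambda>y. indicator S y :: ennreal)) (density \<nu>2 (\<lambda>y. indicator S y :: ennreal)) \<epsilon> w"
  shows "(\<Sum>m\<in>{- int N..int N}. \<bar>(F x (e (m+1)) - F x (e m)) - (F z (e (m+1)) - F z (e m))\<bar>) \<le> Acst * 2^(n+1) * MC"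
proof -
  have Sb: "S \<in> sets borel" unfolding S_def by simp
  have Sdx: "\<And>y. y \<in> S \<Longrightarrow> r < dist x y" using Sd_lemma[OF x] unfolding S_def by auto
  have Sdz: "\<And>y. y \<in> S \<Longrightarrow> r < dist z y" using Sd_lemma[OF z] unfolding S_def by auto
  define I where "I \<nu> \<epsilon> w = (\<integral>y. indicator S y * gE \<phi> K \<epsilon> (w - y) \<partial>\<nu>)" for \<nu> \<epsilon> w
  have FI: "F w (e m) = I \<nu>1 (e m) w - I \<nu>2 (e m) w" for w m
    unfolding F_def I_def by (rule T_eq[OF sb1 sb2 Sb gcont[OF e(1)]])
  define H where "H m y = (indicator S y * gE \<phi> K (e (m+1)) (x - y) - indicator S y * gE \<phi> K (e m) (x - y))
       - (indicator S y * gE \<phi> K (e (m+1)) (z - y) - indicator S y * gE \<phi> K (e m) (z - y))" for m y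
  have intH: "integrable \<nu> (H m)" if "finite_measure \<nu>" "sets \<nu> = sets borel" for \<nu> m
    unfolding H_def using integ_g[OF that e(1) r Sb Sdx] integ_g[OF that e(1) r Sb Sdz]
    by (intro Bochner_Integration.integrable_diff) auto
  have IH: "(\<integral>y. H m y \<partial>\<nu>) = (I \<nu> (e (m+1)) x - I \<nu> (e m) x) - (I \<nu> (e (m+1)) z - I \<nu> (e m) z)"
    if "finite_measure \<nu>" "sets \<nu> = sets borel" for \<nu> m
    unfolding H_def I_def using integ_g[OF that e(1) r Sb Sdx] integ_g[OF that e(1) r Sb Sdz]
    by (subst Bochner_Integration.integral_diff; (intro Bochner_Integration.integrable_diff)?; auto)+
  define f where "f y = indicator S y * (r / norm (x - y)^(n+1))" for y
  have intf: "integrable \<nu> f" if "finite_measure \<nu>" "sets \<nu> = sets borel" for \<nu>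
    unfolding f_def by (rule integ_f[OF that r Sb Sdx])
  have pw: "(\<Sum>m\<in>{- int N..int N}. \<bar>H m y\<bar>) \<le> Acst * f y" for y
  proof (cases "y \<in> S")
    case True
    have d1: "r < norm (x - y)" and d2: "r < norm (z - y)" using Sdx[OF True] Sdz[OF True] by (auto simp: dist_norm)
    have "norm ((x - y) - (z - y)) = dist x z" by (simp add: dist_norm)
    also have "\<dots> \<le> dist x xB + dist xB z" by (rule dist_triangle)
    also have "\<dots> \<le> 2 * r" using x z by (simp add: dist_commute)
    finally have d3: "norm ((x - y) - (z - y)) \<le> 2 * r" .
    have "(\<Sum>m\<in>{- int N..int N}. \<bar>H m y\<bar>) = var N (\<lambda>m. \<phi> (norm (x - y)^2/(e m)^2) * K (x - y) - \<phi> (norm (z - y)^2/(e m)^2) * K (z - y))"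
      unfolding var_def H_def using True by (intro sum.cong refl) (simp add: gE_def phi_eps_def algebra_simps)
    also have "\<dots> \<le> Acst * r / norm (x - y)^(n+1)"
      unfolding Acst_def by (rule pw_var) (fact Kb der bnd CK rng z0 one mono dphi P1 P2 P10 P20 r d1 d2 d3 e)+
    finally show ?thesis using True unfolding f_def by simp
  next
    case False
    thus ?thesis unfolding H_def f_def by simp
  qed
  have sumint: "(\<Sum>m\<in>{- int N..int N}. \<bar>\<integral>y. H m y \<partial>\<nu>\<bar>) \<le> Acst * (\<integral>y. f y \<partial>\<nu>)"
    if "finite_measure \<nu>" "sets \<nu> = sets borel" for \<nu>
  proof -
    have "(\<Sum>m\<in>{- int N..int N}. \<bar>\<integral>y. H m y \<partial>\<nu>\<bar>) \<le> (\<Sum>m\<in>{- int N..int N}. (\<integral>y. \<bar>H m y\<bar> \<partial>\<nu>))"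
      by (intro sum_mono integral_abs_bound)
    also have "\<dots> = (\<integral>y. (\<Sum>m\<in>{- int N..int N}. \<bar>H m y\<bar>) \<partial>\<nu>)"
      using intH[OF that] by (intro Bochner_Integration.integral_sum[symmetric] integrable_abs) auto
    also have "\<dots> \<le> (\<integral>y. Acst * f y \<partial>\<nu>)"
    proof (rule integral_mono')
      show "integrable \<nu> (\<lambda>y. Acst * f y)" using intf[OF that] by simp
      fix y show "(\<Sum>m\<in>{- int N..int N}. \<bar>H m y\<bar>) \<le> Acst * f y" by (rule pw)
      show "0 \<le> Acst * f y" unfolding f_def using Acst0 r by (simp add: indicator_def)
    qed
    also have "\<dots> = Acst * (\<integral>y. f y \<partial>\<nu>)" by simp
    finally show ?thesis .
  qed
  have "(\<Sum>m\<in>{- int N..int N}. \<bar>(F x (e (m+1)) - F x (e m)) - (F z (e (m+1)) - F z (e m))\<bar>)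
      = (\<Sum>m\<in>{- int N..int N}. \<bar>(\<integral>y. H m y \<partial>\<nu>1) - (\<integral>y. H m y \<partial>\<nu>2)\<bar>)"
    unfolding FI IH[OF fm1 sb1] IH[OF fm2 sb2] by (intro sum.cong refl) (simp add: algebra_simps)
  also have "\<dots> \<le> (\<Sum>m\<in>{- int N..int N}. \<bar>\<integral>y. H m y \<partial>\<nu>1\<bar>) + (\<Sum>m\<in>{- int N..int N}. \<bar>\<integral>y. H m y \<partial>\<nu>2\<bar>)"
    unfolding sum.distrib[symmetric] by (intro sum_mono abs_triangle_ineq4)
  also have "\<dots> \<le> Acst * (\<integral>y. f y \<partial>\<nu>1) + Acst * (\<integral>y. f y \<partial>\<nu>2)"
    by (intro add_mono sumint fm1 sb1 fm2 sb2)
  also have "\<dots> = Acst * ((\<integral>y. f y \<partial>\<nu>1) + (\<integral>y. f y \<partial>\<nu>2))" by (simp add: algebra_simps)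
  also have "\<dots> \<le> Acst * (2^(n+1) * MC)"
    unfolding f_def using Acst0 by (intro mult_left_mono int_bound[OF fm1 sb1 fm2 sb2 r Sdx MC Mb]) auto
  finally show ?thesis by (simp add: mult.assoc)
qed

end

lemma rv_nonneg: "0 \<le> rho_variation \<rho> F"
proof -
  define e0 where "e0 = (\<lambda>m::int. exp (- real_of_int m))"
  have mem: "(e0, 0::nat) \<in> {(e :: int \<Rightarrow> real, N :: nat). (\<forall>m. 0 < e m) \<and> (\<forall>m. e (m + 1) < e m)}"
    unfolding e0_def by auto
  have "(0::ereal) \<le> ereal ((\<Sum>m\<in>{- int (snd (e0, 0::nat))..int (snd (e0, 0::nat))}.
                  \<bar>F (fst (e0, 0::nat) (m + 1)) - F (fst (e0, 0::nat) m)\<bar> powr \<rho>) powr (1 / \<rho>))"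
    by simp
  also have "\<dots> \<le> rho_variation \<rho> F" unfolding rho_variation_def
    by (rule SUP_upper[OF mem])
  finally show ?thesis .
qed

lemma rv_le:
  assumes H: "\<And>e N. (\<forall>m. 0 < e m) \<Longrightarrow> (\<forall>m. e (m+1) < e m) \<Longrightarrow>
      (\<Sum>m\<in>{- int N..int N}. \<bar>Fx (e (m + 1)) - Fx (e m)\<bar> powr \<rho>) powr (1 / \<rho>)
      \<le> (\<Sum>m\<in>{- int N..int N}. \<bar>Fz (e (m + 1)) - Fz (e m)\<bar> powr \<rho>) powr (1 / \<rho>) + c"
  shows "rho_variation \<rho> Fx \<le> rho_variation \<rho> Fz + ereal c"
  unfolding rho_variation_def
proof (rule SUP_least)
  fix p assume p: "p \<in> {(e :: int \<Rightarrow> real, N :: nat). (\<forall>m. 0 < e m) \<and> (\<forall>m. e (m + 1) < e m)}"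
  obtain e N where pe: "p = (e, N)" by (cases p)
  have e: "\<forall>m. 0 < e m" "\<forall>m. e (m+1) < e m" using p pe by auto
  have "ereal ((\<Sum>m\<in>{- int (snd p)..int (snd p)}. \<bar>Fx (fst p (m + 1)) - Fx (fst p m)\<bar> powr \<rho>) powr (1 / \<rho>))
     \<le> ereal ((\<Sum>m\<in>{- int (snd p)..int (snd p)}. \<bar>Fz (fst p (m + 1)) - Fz (fst p m)\<bar> powr \<rho>) powr (1 / \<rho>)) + ereal c"
    using H[OF e] pe by simp
  also have "\<dots> \<le> (SUP p\<in>{(e :: int \<Rightarrow> real, N :: nat). (\<forall>m. 0 < e m) \<and> (\<forall>m. e (m + 1) < e m)}.
        ereal ((\<Sum>m\<in>{- int (snd p)..int (snd p)}. \<bar>Fz (fst p (m + 1)) - Fz (fst p m)\<bar> powr \<rho>) powr (1 / \<rho>))) + ereal c"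
    by (intro add_right_mono SUP_upper p)
  finally show "ereal ((\<Sum>m\<in>{- int (snd p)..int (snd p)}. \<bar>Fx (fst p (m + 1)) - Fx (fst p m)\<bar> powr \<rho>) powr (1 / \<rho>))
     \<le> (SUP p\<in>{(e :: int \<Rightarrow> real, N :: nat). (\<forall>m. 0 < e m) \<and> (\<forall>m. e (m + 1) < e m)}.
        ereal ((\<Sum>m\<in>{- int (snd p)..int (snd p)}. \<bar>Fz (fst p (m + 1)) - Fz (fst p m)\<bar> powr \<rho>) powr (1 / \<rho>))) + ereal c" .
qed

theorem mainTheorem5:
  fixes n :: nat and K :: "'a::euclidean_space \<Rightarrow> real" and \<rho> C0 :: real
    and \<phi> :: "real \<Rightarrow> real"
  assumes "1 \<le> n" and "n < DIM('a)" and "2 < \<rho>"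
    and "admissible_kernel n K" and "phiR_admissible \<phi>"
  shows "\<exists>C>0. \<forall>(\<mu> :: 'a measure) \<nu>1 \<nu>2 xB r x z.
     AD_regular n C0 \<mu> \<and> \<not> bounded (supp_meas \<mu>) \<and> finite_signed_borel \<nu>1 \<nu>2 \<and>
     0 < r \<and> x \<in> ball xB r \<and> x \<in> supp_meas \<mu> \<and> z \<in> ball xB r \<longrightarrow>
     (let \<nu>1' = density \<nu>1 (\<lambda>y. indicator (- ball xB (2 * r)) y :: ennreal);
          \<nu>2' = density \<nu>2 (\<lambda>y. indicator (- ball xB (2 * r)) y :: ennreal);
          Vx = rho_variation \<rho> (\<lambda>\<epsilon>. T_phi \<phi> K \<nu>1' \<nu>2' \<epsilon> x);
          Vz = rho_variation \<rho> (\<lambda>\<epsilon>. T_phi \<phi> K \<nu>1' \<nu>2' \<epsilon> z)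
      in Vx \<le> Vz + ereal C * max_mu \<mu> \<nu>1 \<nu>2 x \<and> Vz \<le> Vx + ereal C * max_mu \<mu> \<nu>1 \<nu>2 x)"
proof -
  obtain CK D1 D2 where CK: "CK > 0" and KK: "\<forall>x. x \<noteq> 0 \<longrightarrow>
          \<bar>K x\<bar> \<le> CK / norm x ^ n \<and>
          (\<forall>i\<in>Basis. ((\<lambda>t. K (x + t *\<^sub>R i)) has_real_derivative D1 i x) (at 0) \<and>
             \<bar>D1 i x\<bar> \<le> CK / norm x ^ (n + 1) \<and>
             (\<forall>j\<in>Basis. ((\<lambda>t. D1 i (x + t *\<^sub>R j)) has_real_derivative D2 i j x) (at 0) \<and>
                \<bar>D2 i j x\<bar> \<le> CK / norm x ^ (n + 2)))"
    using assms(4) unfolding admissible_kernel_def by blast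
  have Kb: "\<And>x. x \<noteq> 0 \<Longrightarrow> \<bar>K x\<bar> \<le> CK / norm x ^ n" using KK by blast
  have der: "\<And>x i. x \<noteq> 0 \<Longrightarrow> i \<in> Basis \<Longrightarrow> ((\<lambda>t. K (x + t *\<^sub>R i)) has_real_derivative D1 i x) (at 0)"
    using KK by blast
  have bnd: "\<And>x i. x \<noteq> 0 \<Longrightarrow> i \<in> Basis \<Longrightarrow> \<bar>D1 i x\<bar> \<le> CK / norm x ^ (n+1)" using KK by blast
  note pb = phi_basic[OF assms(5)]
  obtain \<phi>1 P1 P2 where pd:
    "\<And>t. 0 < t \<Longrightarrow> (\<phi> has_real_derivative \<phi>1 t) (at t)"
    "\<And>t. 0 \<le> t \<Longrightarrow> t \<le> 16 \<Longrightarrow> \<bar>\<phi>1 t\<bar> \<le> P1"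
    "\<And>s t. 0 < s \<Longrightarrow> s \<le> 16 \<Longrightarrow> 0 < t \<Longrightarrow> t \<le> 16 \<Longrightarrow> \<bar>\<phi>1 s - \<phi>1 t\<bar> \<le> P2 * \<bar>s - t\<bar>"
    "0 \<le> P1" "0 \<le> P2"
    using phi_deriv[OF assms(5)] by metis
  interpret S: setting K \<phi> \<phi>1 D1 CK P1 P2 n
    by unfold_locales (use Kb der bnd CK pb pd in auto)
  define C where "C = 2^(n+1) * (S.Acst + 1) * (\<bar>C0\<bar> + 1)"
  have C0p: "0 < C" unfolding C_def using S.Acst0 by (intro mult_pos_pos) auto
  show ?thesis
  proof (intro exI[of _ C] conjI allI impI C0p)
    fix \<mu> \<nu>1 \<nu>2 :: "'a measure" and xB x z :: 'a and r :: real
    assume H: "AD_regular n C0 \<mu> \<and> \<not> bounded (supp_meas \<mu>) \<and> finite_signed_borel \<nu>1 \<nu>2 \<and>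
     0 < r \<and> x \<in> ball xB r \<and> x \<in> supp_meas \<mu> \<and> z \<in> ball xB r"
    have ad: "AD_regular n C0 \<mu>" and fs: "finite_signed_borel \<nu>1 \<nu>2" and r: "0 < r"
      and x: "x \<in> ball xB r" and xs: "x \<in> supp_meas \<mu>" and z: "z \<in> ball xB r" using H by auto
    have sbmu: "sets \<mu> = sets borel" and C0: "0 < C0"
      and adb: "\<And>R. 0 < R \<Longrightarrow> ennreal (R ^ n / C0) \<le> emeasure \<mu> (ball x R) \<and> emeasure \<mu> (ball x R) \<le> ennreal (C0 * R ^ n)"
      using ad xs unfolding AD_regular_def by auto
    have sb1: "sets \<nu>1 = sets borel" and sb2: "sets \<nu>2 = sets borel"
      and fm1: "finite_measure \<nu>1" and fm2: "finite_measure \<nu>2"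
      using fs unfolding finite_signed_borel_def by auto
    have mub: "R ^ n / C0 \<le> measure \<mu> (ball x R) \<and> measure \<mu> (ball x R) \<le> C0 * R ^ n" if R: "0 < R" for R
    proof -
      have a: "ennreal (R ^ n / C0) \<le> emeasure \<mu> (ball x R)" "emeasure \<mu> (ball x R) \<le> ennreal (C0 * R ^ n)"
        using adb[OF R] by auto
      have "emeasure \<mu> (ball x R) < top" using a(2) ennreal_less_top by (rule le_less_trans)
      hence fin: "emeasure \<mu> (ball x R) \<noteq> top" by simp
      hence eq: "emeasure \<mu> (ball x R) = ennreal (measure \<mu> (ball x R))" by (rule emeasure_eq_ennreal_measure)
      have "R ^ n / C0 \<le> measure \<mu> (ball x R)" using a(1) unfolding eq by (simp add: ennreal_le_iff)
      moreover have "measure \<mu> (ball x R) \<le> C0 * R ^ n" using a(2) C0 R unfolding eq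
        by (subst (asm) ennreal_le_iff) auto
      ultimately show ?thesis by simp
    qed
    have mupos: "0 < measure \<mu> (ball x R)" if "0 < R" for R
      using mub[OF that] that C0 by (smt (verit) divide_pos_pos zero_less_power)
    define q where "q R = (measure \<nu>1 (ball x R) + measure \<nu>2 (ball x R)) / measure \<mu> (ball x R)" for R
    have q0: "0 \<le> q R" for R unfolding q_def by simp
    have Mdef: "max_mu \<mu> \<nu>1 \<nu>2 x = (SUP R\<in>{0<..}. ereal (q R))" unfolding max_mu_def q_def ..
    have Mge: "ereal (q R) \<le> max_mu \<mu> \<nu>1 \<nu>2 x" if "0 < R" for R
      unfolding Mdef using that by (intro SUP_upper) auto
    have M0: "0 \<le> max_mu \<mu> \<nu>1 \<nu>2 x" using Mge[of 1] q0[of 1] by (meson ereal_less_eq(5) order_trans zero_less_one)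
    define S where "S = - ball xB (2 * r)"
    define Fx where "Fx = (\<lambda>\<epsilon>. T_phi \<phi> K (density \<nu>1 (\<lambda>y. indicator S y :: ennreal)) (density \<nu>2 (\<lambda>y. indicator S y :: ennreal)) \<epsilon> x)"
    define Fz where "Fz = (\<lambda>\<epsilon>. T_phi \<phi> K (density \<nu>1 (\<lambda>y. indicator S y :: ennreal)) (density \<nu>2 (\<lambda>y. indicator S y :: ennreal)) \<epsilon> z)"
    have goal: "rho_variation \<rho> Fx \<le> rho_variation \<rho> Fz + ereal C * max_mu \<mu> \<nu>1 \<nu>2 x \<and>
                rho_variation \<rho> Fz \<le> rho_variation \<rho> Fx + ereal C * max_mu \<mu> \<nu>1 \<nu>2 x"
    proof (cases "max_mu \<mu> \<nu>1 \<nu>2 x = \<infinity>")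
      case True
      have inf: "ereal C * max_mu \<mu> \<nu>1 \<nu>2 x = \<infinity>" using True C0p by simp
      have "rho_variation \<rho> Fx \<noteq> - \<infinity>" "rho_variation \<rho> Fz \<noteq> - \<infinity>"
        using rv_nonneg[of \<rho> Fx] rv_nonneg[of \<rho> Fz] by auto
      thus ?thesis unfolding inf by simp
    next
      case False
      then obtain M where MM: "max_mu \<mu> \<nu>1 \<nu>2 x = ereal M" using M0 by (cases "max_mu \<mu> \<nu>1 \<nu>2 x") auto
      have Mp: "0 \<le> M" using M0 MM by simp
      have Mb: "measure \<nu>1 (ball x R) + measure \<nu>2 (ball x R) \<le> (M * C0) * R^n" if R: "0 < R" for R
      proof -
        have "q R \<le> M" using Mge[OF R] MM by simp
        hence "measure \<nu>1 (ball x R) + measure \<nu>2 (ball x R) \<le> M * measure \<mu> (ball x R)"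
          using mupos[OF R] unfolding q_def by (simp add: divide_le_eq mult.commute)
        also have "\<dots> \<le> M * (C0 * R ^ n)" using mub[OF R] Mp by (intro mult_left_mono) auto
        finally show ?thesis by (simp add: mult.assoc)
      qed
      have MC: "0 \<le> M * C0" using Mp C0 by simp
      have CM: "S.Acst * 2^(n+1) * (M * C0) \<le> C * M"
      proof -
        have "S.Acst * 2^(n+1) * (M * C0) = 2^(n+1) * S.Acst * C0 * M" by (simp add: algebra_simps)
        also have "\<dots> \<le> 2^(n+1) * (S.Acst + 1) * (\<bar>C0\<bar> + 1) * M"
          using S.Acst0 Mp C0 by (intro mult_right_mono mult_mono) auto
        finally show ?thesis unfolding C_def .
      qed
      have ds: "(\<Sum>m\<in>{- int N..int N}. \<bar>(Fx (e (m+1)) - Fx (e m)) - (Fz (e (m+1)) - Fz (e m))\<bar>) \<le> C * M"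
        if e: "\<forall>m. 0 < e m" "\<forall>m. e (m+1) < e m" for e N
      proof -
        have "(\<Sum>m\<in>{- int N..int N}. \<bar>(Fx (e (m+1)) - Fx (e m)) - (Fz (e (m+1)) - Fz (e m))\<bar>) \<le> S.Acst * 2^(n+1) * (M * C0)"
          unfolding Fx_def Fz_def S_def
          by (rule S.deltasum[OF fm1 sb1 fm2 sb2 r x z MC Mb]) (use e in auto)
        thus ?thesis using CM by linarith
      qed
      have rr: "1 \<le> \<rho>" using assms(3) by simp
      have d1: "rho_variation \<rho> Fx \<le> rho_variation \<rho> Fz + ereal (C * M)"
      proof (rule rv_le)
        fix e :: "int \<Rightarrow> real" and N :: nat assume e: "\<forall>m. 0 < e m" "\<forall>m. e (m+1) < e m"
        show "(\<Sum>m\<in>{- int N..int N}. \<bar>Fx (e (m + 1)) - Fx (e m)\<bar> powr \<rho>) powr (1 / \<rho>)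
          \<le> (\<Sum>m\<in>{- int N..int N}. \<bar>Fz (e (m + 1)) - Fz (e m)\<bar> powr \<rho>) powr (1 / \<rho>) + C * M"
          using lrho_lip[where a="\<lambda>m. Fx (e (m + 1)) - Fx (e m)" and b="\<lambda>m. Fz (e (m + 1)) - Fz (e m)", OF finite_atLeastAtMost_int[of "- int N" "int N"] rr]
            ds[OF e, of N] by linarith
      qed
      have d2: "rho_variation \<rho> Fz \<le> rho_variation \<rho> Fx + ereal (C * M)"
      proof (rule rv_le)
        fix e :: "int \<Rightarrow> real" and N :: nat assume e: "\<forall>m. 0 < e m" "\<forall>m. e (m+1) < e m"
        have "(\<Sum>m\<in>{- int N..int N}. \<bar>(Fz (e (m+1)) - Fz (e m)) - (Fx (e (m+1)) - Fx (e m))\<bar>) \<le> C * M"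
          using ds[OF e, of N] by (simp add: abs_minus_commute)
        thus "(\<Sum>m\<in>{- int N..int N}. \<bar>Fz (e (m + 1)) - Fz (e m)\<bar> powr \<rho>) powr (1 / \<rho>)
          \<le> (\<Sum>m\<in>{- int N..int N}. \<bar>Fx (e (m + 1)) - Fx (e m)\<bar> powr \<rho>) powr (1 / \<rho>) + C * M"
          using lrho_lip[where a="\<lambda>m. Fz (e (m + 1)) - Fz (e m)" and b="\<lambda>m. Fx (e (m + 1)) - Fx (e m)", OF finite_atLeastAtMost_int[of "- int N" "int N"] rr]
          by simp
      qed
      show ?thesis using d1 d2 unfolding MM by simp
    qed
    show "let \<nu>1' = density \<nu>1 (\<lambda>y. indicator (- ball xB (2 * r)) y :: ennreal);
          \<nu>2' = density \<nu>2 (\<lambda>y. indicator (- ball xB (2 * r)) y :: ennreal);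
          Vx = rho_variation \<rho> (\<lambda>\<epsilon>. T_phi \<phi> K \<nu>1' \<nu>2' \<epsilon> x);
          Vz = rho_variation \<rho> (\<lambda>\<epsilon>. T_phi \<phi> K \<nu>1' \<nu>2' \<epsilon> z)
      in Vx \<le> Vz + ereal C * max_mu \<mu> \<nu>1 \<nu>2 x \<and> Vz \<le> Vx + ereal C * max_mu \<mu> \<nu>1 \<nu>2 x"
      using goal unfolding Let_def Fx_def Fz_def S_def .
  qed
qed

end
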